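(* Let $n\ge 3000$. Consider a one-dimensional stochastic convex optimization problem with i.i.d. samples $S_1,\dots,S_{2n}$, where $f_1,\dots,f_n$ (with $f_i=f(\cdot;S_i)$) form the validation set and $f_{n+1},\dots,f_{2n}$ the training set. For learning rates $\eta_0,\eta_1,\dots,\eta_K>0$ let $x_k=\mathrm{AdaSGD}(\eta_k)$ and $k_{\mathrm{greedy}}\in\arg\min_{k\in\{0,\dots,K\}}\frac1n\sum_{i=1}^n f_i(x_k)$. Then there exists a stochastic convex optimization problem (a distribution of $S$ and a function $f(x;S)$ convex and $1$-Lipschitz in $x$) whose population risk $F(x)=\mathbb{E}[f(x;S)]$ is minimized at the origin, such that with probability at least $1/1000$, \[ F(x_{k_{\mathrm{greedy}}})-F^\star\ge \frac{1}{288\sqrt n}\max_{k\in\{0,\dots,K\}}\eta_k, \] where $F^\star=\inf_x F(x)$.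
   Context: $\mathrm{AdaSGD}(R)$ (adaptive SGD with learning rate $R>0$) is defined as follows: $u_1=0$, and for $t=1,\dots,n$, $u_{t+1}=\mathrm{proj}_R\Big(u_t-R\,\frac{g_t}{\sqrt{\sum_{j=1}^t\|g_j\|_2^2}}\Big)$ where $g_t$ is a (sub)gradient of $f_{n+t}$ at $u_t$ and $\mathrm{proj}_R(\hat u)=\arg\min_{u\in\mathcal{X}:\|u\|_2\le R}\|u-\hat u\|_2$; the output is $\mathrm{AdaSGD}(R)=\bar u_n=\frac1n\sum_{j=1}^n u_j$. Thus AdaSGD only uses the training samples $f_{n+1},\dots,f_{2n}$. *)

theory Defs
  imports "HOL-Probability.Probability"
begin

definition proj_ball :: "real \<Rightarrow> real \<Rightarrow> real" where
  "proj_ball R v = max (- R) (min R v)"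

text \<open>State of AdaSGD(R) after t steps: (u_{t+1}, sum_{j<=t} g_j^2).
  Here gr x s is a subgradient of f(.;s) at x and T t = S_{n+t} is the t-th
  training sample (t >= 1).\<close>
fun ada_state :: "(real \<Rightarrow> real \<Rightarrow> real) \<Rightarrow> real \<Rightarrow> (nat \<Rightarrow> real) \<Rightarrow> nat \<Rightarrow> real \<times> real" where
  "ada_state gr R T 0 = (0, 0)"
| "ada_state gr R T (Suc t) =
     (let u = fst (ada_state gr R T t);
          gt = gr u (T (Suc t));
          G = snd (ada_state gr R T t) + gt\<^sup>2
      in (proj_ball R (u - R * gt / sqrt G), G))"

definition adasgd :: "nat \<Rightarrow> (real \<Rightarrow> real \<Rightarrow> real) \<Rightarrow> real \<Rightarrow> (nat \<Rightarrow> real) \<Rightarrow> real" where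
  "adasgd n gr R S = (\<Sum>t<n. fst (ada_state gr R (\<lambda>t. S (n + t)) t)) / real n"

definition val_risk :: "nat \<Rightarrow> (real \<Rightarrow> real \<Rightarrow> real) \<Rightarrow> (nat \<Rightarrow> real) \<Rightarrow> real \<Rightarrow> real" where
  "val_risk n f S x = (\<Sum>i=1..n. f x (S i)) / real n"

definition pop_risk :: "real measure \<Rightarrow> (real \<Rightarrow> real \<Rightarrow> real) \<Rightarrow> real \<Rightarrow> real" where
  "pop_risk D f x = (\<integral>s. f x s \<partial>D)"

end

theory Submission
  imports Defs "HOL-Probability.Probability"
begin

definition psi :: "real \<Rightarrow> real" where "psi u = 3/10*u + 21/20*u^2 - 4/5*u^3"

definition st :: "real \<times> real \<Rightarrow> real \<Rightarrow> real \<times> real" where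
  "st x g = (proj_ball 1 (fst x - 1 * g / sqrt (snd x + g\<^sup>2)), snd x + g\<^sup>2)"

definition Phi :: "real \<times> real \<Rightarrow> real" where
  "Phi x = snd x * psi (fst x) + 8 * min (snd x) 81"

lemma idP:
  fixes s u ep :: real
  assumes "s > 0"
  shows "s^2 * ((1-ep)/2 * psi (u + 1/s) + (1+ep)/2 * psi (u - 1/s)) - (s^2 - 1) * psi u
     = psi u + 21/20 - 12/5*u - ep * s * (3/10 + 21/10*u - 12/5*u^2) + ep*(4/5)/s"
  using assms unfolding psi_def by (simp add: field_simps power2_eq_square power3_eq_cube)

lemma idN:
  fixes s u :: real
  assumes "s > 0"
  shows "s^2 * psi (u + 1/s) - (s^2 - 1) * psi u
     = psi u + s * (3/10 + 21/10*u - 12/5*u^2) + 21/20 - 12/5*u - (4/5)/s"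
  using assms unfolding psi_def by (simp add: field_simps power2_eq_square power3_eq_cube)

lemma cube_le_sq: fixes u :: real assumes "0 \<le> u" "u \<le> 1" shows "u^3 \<le> u^2"
proof -
  have "u^2 * u \<le> u^2 * 1" by (rule mult_left_mono) (use assms in auto)
  thus ?thesis by (simp add: power2_eq_square power3_eq_cube)
qed

lemma sq_le: fixes u :: real assumes "0 \<le> u" "u \<le> 1" shows "u^2 \<le> u"
proof -
  have "u * u \<le> u * 1" by (rule mult_left_mono) (use assms in auto)
  thus ?thesis by (simp add: power2_eq_square)
qed

lemma polyP:
  fixes u :: real
  assumes "0 \<le> u" "u \<le> 1"
  shows "psi u + 21/20 - 12/5*u - (3/10 + 21/10*u - 12/5*u^2)/10 \<ge> 1 - 12/5*u"
proof -
  have "u^3 \<le> u^2" "0 \<le> u^2" using cube_le_sq[OF assms] by auto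
  moreover have "psi u + 21/20 - 12/5*u - (3/10 + 21/10*u - 12/5*u^2)/10 - (1 - 12/5*u)
     = 1/50 + 9/100*u + 129/100*u^2 - 4/5*u^3" unfolding psi_def by (simp add: field_simps)
  ultimately show ?thesis using assms by linarith
qed

lemma dpsi_nonneg:
  fixes u :: real
  assumes "0 \<le> u" "u \<le> 1"
  shows "0 \<le> 3/10 + 21/10*u - 12/5*u^2"
  using sq_le[OF assms] assms by linarith

lemma psi_top:
  fixes x :: real
  assumes "1 \<le> x" "x \<le> 2"
  shows "psi x \<le> psi 1"
proof -
  define w where "w = x - 1"
  have w: "0 \<le> w" using assms w_def by auto
  have "psi x - psi 1 = -(27/20) * w^2 - 4/5 * w^3"
    unfolding psi_def w_def by (simp add: field_simps power2_eq_square power3_eq_cube)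
  moreover have "0 \<le> w^2" "0 \<le> w^3" using w by auto
  ultimately show ?thesis by linarith
qed

lemma psi_ge_lin: fixes x :: real assumes "x \<le> 1" shows "3/10 * x \<le> psi x"
proof -
  have "psi x - 3/10 * x = x^2 * (21/20 - 4/5 * x)"
    unfolding psi_def by (simp add: field_simps power2_eq_square power3_eq_cube)
  moreover have "0 \<le> x^2 * (21/20 - 4/5 * x)" using assms by (intro mult_nonneg_nonneg) auto
  ultimately show ?thesis by linarith
qed

lemma psi_mono01: fixes a b :: real assumes "0 \<le> a" "a \<le> b" "b \<le> 1" shows "psi a \<le> psi b"
proof -
  have e: "psi b - psi a = (b - a) * (3/10 + 21/20*(a+b) - 4/5*(a^2 + a*b + b^2))"
    unfolding psi_def by (simp add: field_simps power2_eq_square power3_eq_cube)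
  have "a^2 \<le> a" "b^2 \<le> b" using sq_le assms by auto
  moreover have "2*(a*b) \<le> a^2 + b^2" using sum_squares_bound[of a b] by (simp add: algebra_simps)
  moreover have "3/10 + 21/20*(a+b) - 4/5*(a^2 + a*b + b^2) = 3/10 + 21/20*a + 21/20*b - 4/5*a^2 - 4/5*(a*b) - 4/5*b^2"
    by (simp add: algebra_simps)
  ultimately have "0 \<le> 3/10 + 21/20*(a+b) - 4/5*(a^2 + a*b + b^2)" using assms by linarith
  hence "0 \<le> psi b - psi a" unfolding e using assms by (intro mult_nonneg_nonneg) auto
  thus ?thesis by linarith
qed

lemma proj1: "-1 \<le> x \<Longrightarrow> x \<le> 1 \<Longrightarrow> proj_ball 1 x = x"
  by (simp add: proj_ball_def)

lemma st_eq: "st (u,G) g = (proj_ball 1 (u - g / sqrt (G + g^2)), G + g^2)"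
  by (simp add: st_def)

lemma xx: fixes a b c d e :: real shows "a \<le> b \<Longrightarrow> 0 \<le> e \<Longrightarrow> a + c - d \<le> b + c - d + e"
  by linarith

lemma caseP:
  fixes u G ep :: real
  assumes u: "0 < u" "u \<le> 1" and G: "0 \<le> G" and ep: "0 \<le> ep" "ep * sqrt (G+1) \<le> 1/10"
  shows "(1-ep)/2 * Phi (st (u,G) (-1)) + (1+ep)/2 * Phi (st (u,G) 1) - Phi (u,G) \<ge> 1 - 12/5*u"
proof -
  define s where "s = sqrt (G+1)"
  have s1: "1 \<le> s" using G by (simp add: s_def)
  have s2: "s^2 = G + 1" using G by (simp add: s_def)
  have hs: "0 < 1/s" "1/s \<le> 1" using s1 by auto
  have stU: "st (u,G) (-1) = (min 1 (u + 1/s), G+1)"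
  proof -
    have "st (u,G) (-1) = (proj_ball 1 (u + 1/s), G+1)" by (simp add: st_eq s_def)
    moreover have "proj_ball 1 (u + 1/s) = min 1 (u + 1/s)"
      unfolding proj_ball_def using u hs by linarith
    ultimately show ?thesis by simp
  qed
  have stD: "st (u,G) 1 = (u - 1/s, G+1)"
  proof -
    have "st (u,G) 1 = (proj_ball 1 (u - 1/s), G+1)" by (simp add: st_eq s_def)
    moreover have "proj_ball 1 (u - 1/s) = u - 1/s" using u hs by (intro proj1) linarith+
    ultimately show ?thesis by simp
  qed
  have pm: "psi (u + 1/s) \<le> psi (min 1 (u + 1/s))"
  proof (cases "u + 1/s \<le> 1")
    case False
    hence "min 1 (u + 1/s) = 1" by simp
    thus ?thesis using psi_top[of "u + 1/s"] u hs False by simp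
  qed simp
  have mins: "min G 81 \<le> min (G+1) 81" by simp
  have "ep \<le> ep * s" using ep s1 by (simp add: mult_le_cancel_left1)
  hence ep1: "0 \<le> 1 - ep" using ep by (simp add: s_def)
  have "(1-ep)/2 * Phi (st (u,G) (-1)) + (1+ep)/2 * Phi (st (u,G) 1) - Phi (u,G)
     = (1-ep)/2 * ((G+1) * psi (min 1 (u + 1/s))) + (1+ep)/2 * ((G+1) * psi (u - 1/s)) - G * psi u
       + 8 * (min (G+1) 81 - min G 81)"
    unfolding Phi_def stU stD fst_conv snd_conv by (simp add: field_simps)
  also have "\<dots> \<ge> (1-ep)/2 * ((G+1) * psi (u + 1/s)) + (1+ep)/2 * ((G+1) * psi (u - 1/s)) - G * psi u"
  proof -
    have "(1-ep)/2 * ((G+1) * psi (u + 1/s)) \<le> (1-ep)/2 * ((G+1) * psi (min 1 (u + 1/s)))"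
      using pm G ep1 by (intro mult_left_mono) auto
    moreover have "0 \<le> 8 * (min (G+1) 81 - min G 81)" using mins by simp
    ultimately show ?thesis by (rule xx)
  qed
  also have "(1-ep)/2 * ((G+1) * psi (u + 1/s)) + (1+ep)/2 * ((G+1) * psi (u - 1/s)) - G * psi u
      = s^2 * ((1-ep)/2 * psi (u + 1/s) + (1+ep)/2 * psi (u - 1/s)) - (s^2 - 1) * psi u"
    unfolding s2 by (simp add: field_simps)
  also have "\<dots> = psi u + 21/20 - 12/5*u - ep * s * (3/10 + 21/10*u - 12/5*u^2) + ep*(4/5)/s"
    using s1 by (intro idP) auto
  also have "\<dots> \<ge> psi u + 21/20 - 12/5*u - (3/10 + 21/10*u - 12/5*u^2)/10"
  proof -
    have d: "0 \<le> 3/10 + 21/10*u - 12/5*u^2" using dpsi_nonneg u by auto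
    have "ep * s * (3/10 + 21/10*u - 12/5*u^2) \<le> 1/10 * (3/10 + 21/10*u - 12/5*u^2)"
      using ep d by (intro mult_right_mono) (auto simp: s_def)
    moreover have "0 \<le> ep*(4/5)/s" using ep s1 by auto
    ultimately show ?thesis by linarith
  qed
  finally show ?thesis using polyP[of u] u by linarith
qed

lemma sqrt_pos_lemma: fixes G :: real assumes "0 \<le> G" shows "1 \<le> sqrt (G+1)" "0 < sqrt (G+1)" "(sqrt (G+1))^2 = G+1"
  using assms by auto

lemma aux310: "-1 \<le> x \<Longrightarrow> -3/10 \<le> 3/10 * (x::real)" by linarith

lemma caseN:
  fixes u G ep :: real
  assumes u: "u < 0" "-1 \<le> u" "-1/sqrt G \<le> u" and G: "0 \<le> G"
  shows "(1-ep)/2 * Phi (st (u,G) (-1)) + (1+ep)/2 * Phi (st (u,G) (-1)) - Phi (u,G) \<ge> 1 - 12/5*u"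
proof -
  have Gp: "0 < G"
  proof (rule ccontr)
    assume "\<not> 0 < G" hence "G = 0" using G by simp
    thus False using u by simp
  qed
  define s where "s = sqrt (G+1)"
  have s1: "1 \<le> s" "0 < s" and s2: "s^2 = G + 1" using sqrt_pos_lemma[OF G] by (auto simp: s_def)
  have hs: "0 < 1/s" "1/s \<le> 1" using s1 by auto
  have stN: "st (u,G) (-1) = (u + 1/s, G+1)"
  proof -
    have "st (u,G) (-1) = (proj_ball 1 (u + 1/s), G+1)" by (simp add: st_eq s_def)
    moreover have "proj_ball 1 (u + 1/s) = u + 1/s" using u hs by (intro proj1) linarith+
    ultimately show ?thesis by simp
  qed
  define w where "w = -u"
  have w: "0 < w" "w \<le> 1" "w \<le> 1/sqrt G" using u by (auto simp: w_def)
  have psiu: "psi u = -3/10*w + 21/20*w^2 + 4/5*w^3" unfolding psi_def w_def by (simp add: power3_eq_cube)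
  have w23: "0 \<le> w^2" "0 \<le> w^3" using w by auto
  have "(1-ep)/2 * Phi (st (u,G) (-1)) + (1+ep)/2 * Phi (st (u,G) (-1)) - Phi (u,G)
      = (G+1) * psi (u + 1/s) - G * psi u + 8 * (min (G+1) 81 - min G 81)"
    unfolding Phi_def stN fst_conv snd_conv by (simp add: field_simps)
  also have "(G+1) * psi (u + 1/s) - G * psi u = s^2 * psi (u + 1/s) - (s^2 - 1) * psi u"
    unfolding s2 by simp
  finally have L: "(1-ep)/2 * Phi (st (u,G) (-1)) + (1+ep)/2 * Phi (st (u,G) (-1)) - Phi (u,G)
      = s^2 * psi (u + 1/s) - (s^2 - 1) * psi u + 8 * (min (G+1) 81 - min G 81)" .
  have I: "s^2 * psi (u + 1/s) - (s^2 - 1) * psi u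
     = psi u + s * (3/10 + 21/10*u - 12/5*u^2) + 21/20 - 12/5*u - (4/5)/s"
    using s1 by (intro idN) auto
  have I2: "s * (3/10 + 21/10*u - 12/5*u^2) = 3/10 * s - 21/10 * (s*w) - 12/5 * ((s*w)*w)"
    unfolding w_def by (simp add: algebra_simps power2_eq_square)
  have sw2: "(s*w)^2 \<le> (G+1)/G"
  proof -
    have "w^2 \<le> (1/sqrt G)^2" using w by (intro power_mono) auto
    also have "\<dots> = 1/G" using Gp by (simp add: power_divide)
    finally have "w^2 \<le> 1/G" .
    hence "s^2 * w^2 \<le> (G+1) * (1/G)" unfolding s2 using G by (intro mult_left_mono) auto
    thus ?thesis by (simp add: power_mult_distrib)
  qed
  have w2G: "w^2 \<le> 1/G"
  proof -
    have "w^2 \<le> (1/sqrt G)^2" using w by (intro power_mono) auto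
    also have "\<dots> = 1/G" using Gp by (simp add: power_divide)
    finally show ?thesis .
  qed
  have swpos: "0 \<le> s*w" using s1 w by auto
  show ?thesis
  proof (cases "80 \<le> G")
    case True
    have s9: "9 \<le> s"
    proof -
      have "9^2 \<le> s^2" using True s2 by simp
      show ?thesis by (rule power2_le_imp_le[OF \<open>9^2 \<le> s^2\<close>]) (use s1 in linarith)
    qed
    have "(s*w)^2 \<le> (101/100)^2"
    proof -
      have "(G+1)/G = 1 + 1/G" using Gp by (simp add: field_simps)
      moreover have "1/G \<le> 1/80" using True by (intro divide_left_mono) auto
      moreover have "(101/100)^2 = (10201/10000::real)" by (simp add: power2_eq_square)
      ultimately show ?thesis using sw2 by linarith
    qed
    hence sw: "s*w \<le> 101/100" by (rule power2_le_imp_le) simp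
    have "1/G \<le> 1/80" using True by (intro divide_left_mono) auto
    moreover have "(3/25)^2 = (9/625::real)" by (simp add: power2_eq_square)
    ultimately have "w^2 \<le> (3/25)^2" using w2G by linarith
    hence w12: "w \<le> 3/25" by (rule power2_le_imp_le) simp
    have sww: "(s*w)*w \<le> 101/100 * (3/25)" using sw w12 swpos w by (intro mult_mono) auto
    have isb: "4/5/s \<le> 4/45" using s9 by (simp add: divide_simps)
    have d: "0 \<le> 8 * (min (G+1) 81 - min G 81)" by simp
    have wu: "u = -w" by (simp add: w_def)
    show ?thesis unfolding L unfolding I unfolding I2 psiu using sw sww isb w w23 s9 d wu w12 by linarith
  next
    case False
    hence d: "8 * (min (G+1) 81 - min G 81) = 8" by simp
    show ?thesis
    proof (cases "1 \<le> G")
      case True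
      have "(s*w)^2 \<le> (3/2)^2"
      proof -
        have "(G+1)/G = 1 + 1/G" using Gp by (simp add: field_simps)
        moreover have "1/G \<le> 1" using True by simp
        moreover have "(3/2)^2 = (9/4::real)" by (simp add: power2_eq_square)
        ultimately show ?thesis using sw2 by linarith
      qed
      hence sw: "s*w \<le> 3/2" by (rule power2_le_imp_le) simp
      have sww: "(s*w)*w \<le> 3/2 * w" using sw w by (intro mult_right_mono) auto
      have isb: "4/5/s \<le> 4/5" using s1 by (simp add: divide_simps)
      have wu: "u = -w" by (simp add: w_def)
      show ?thesis unfolding L unfolding I unfolding I2 psiu d using sw sww isb w w23 s1 wu by linarith
    next
      case False
      have G1: "G < 1" using False by simp
      have v: "u + 1/s \<le> 1" using u hs by linarith
      have pv: "3/10 * (u + 1/s) \<le> psi (u + 1/s)" using psi_ge_lin[OF v] .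
      have "(G+1) * (3/10 * (u + 1/s)) \<le> (G+1) * psi (u + 1/s)" using pv G by (intro mult_left_mono) auto
      moreover have "-1 \<le> u + 1/s" using u hs by linarith
      hence "-3/10 \<le> 3/10 * (u + 1/s)" by (rule aux310)
      hence "(G+1) * (3/10 * (u + 1/s)) \<ge> (G+1) * (-3/10)" using G by (intro mult_left_mono) auto
      moreover have "psi u \<le> 37/20"
      proof -
        have "w^2 \<le> w" "w^3 \<le> w^2" using sq_le[of w] cube_le_sq[of w] w by auto
        thus ?thesis unfolding psiu using w by linarith
      qed
      hence "G * psi u \<le> G * (37/20)" using G by (intro mult_left_mono) auto
      moreover have "(G+1) * (-3/10) = -3/10*G - 3/10" "G * (37/20) = 37/20 * G" by (simp_all add: field_simps)
      ultimately have "(G+1) * psi (u + 1/s) - G * psi u \<ge> -3/5 - 37/20" using G1 G by linarith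
      hence "s^2 * psi (u + 1/s) - (s^2 - 1) * psi u \<ge> -3/5 - 37/20" unfolding s2 by simp
      thus ?thesis unfolding L d using u by linarith
    qed
  qed
qed

lemma lin_M: fixes S A x X2 :: real
  assumes "9*(1-x) \<le> S" "A \<le> 1/3 - 1/3*x" "0 \<le> 1 - 2*x + X2" "x \<le> 1"
  shows "21/10 \<le> 3/10*S + 21/20*(1 + X2) - 4/5*A" using assms by (simp add: field_simps)

lemma caseZ:
  fixes G ep g0 :: real
  assumes G: "0 \<le> G" and g0: "\<bar>g0\<bar> \<le> 1" and ep: "0 \<le> ep" "ep \<le> 1/500" "ep * sqrt (G+1) \<le> 1/10"
  shows "(1-ep)/2 * Phi (st (0,G) (-1)) + (1+ep)/2 * Phi (st (0,G) g0) - Phi (0,G) \<ge> 1"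
proof -
  define s where "s = sqrt (G+1)"
  have s1: "1 \<le> s" "0 < s" and s2: "s^2 = G + 1" using sqrt_pos_lemma[OF G] by (auto simp: s_def)
  have hs: "0 < 1/s" "1/s \<le> 1" using s1 by auto
  have eps: "ep * s \<le> 1/10" using ep by (simp add: s_def)
  have stU: "st (0,G) (-1) = (1/s, G+1)"
  proof -
    have "st (0,G) (-1) = (proj_ball 1 (1/s), G+1)" by (simp add: st_eq s_def)
    moreover have "proj_ball 1 (1/s) = 1/s" using hs by (intro proj1) linarith+
    ultimately show ?thesis by simp
  qed
  have P0: "Phi (0,G) = 8 * min G 81" by (simp add: Phi_def psi_def)
  have e1: "(G+1) * psi (1/s) = 3/10* s + 21/20 - 4/5/s"
  proof -
    have "(G+1) * psi (1/s) = s^2 * psi (1/s)" by (simp add: s2)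
    also have "\<dots> = 3/10* s + 21/20 - 4/5/s" using s1 unfolding psi_def
      by (simp add: field_simps power2_eq_square power3_eq_cube)
    finally show ?thesis .
  qed
  define dU where "dU = Phi (st (0,G) (-1)) - Phi (0,G)"
  have dU: "dU = 3/10* s + 21/20 - 4/5/s + 8 * (min (G+1) 81 - min G 81)"
  proof -
    have "Phi (st (0,G) (-1)) = (G+1) * psi (1/s) + 8 * min (G+1) 81" unfolding stU by (simp add: Phi_def)
    thus ?thesis unfolding dU_def P0 e1 by (simp add: right_diff_distrib)
  qed
  define dD where "dD = Phi (st (0,G) g0) - Phi (0,G)"
  have split: "(1-ep)/2 * Phi (st (0,G) (-1)) + (1+ep)/2 * Phi (st (0,G) g0) - Phi (0,G)
     = (1-ep)/2 * dU + (1+ep)/2 * dD" unfolding dU_def dD_def by (simp add: field_simps)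
  have D0: "dD = 0" if "g0 = 0"
  proof -
    have "st (0,G) g0 = (0, G)" using that by (simp add: st_eq proj_ball_def)
    thus ?thesis by (simp add: dD_def)
  qed
  define s' where "s' = sqrt (G + g0^2)"
  have Dn: "dD = -3/10*g0* s' + 21/20*g0^2 + 4/5*g0^3/s' + 8 * (min (G + g0^2) 81 - min G 81)
         \<and> 0 < s' \<and> \<bar>g0\<bar> \<le> s' \<and> s'^2 = G + g0^2" if "g0 \<noteq> 0"
  proof -
    have sp: "0 < s'" using that G by (simp add: s'_def add_nonneg_pos)
    have s2': "s'^2 = G + g0^2" using G by (simp add: s'_def)
    have ab: "\<bar>g0\<bar> \<le> s'" unfolding s'_def using G by (metis add_0 add_right_mono real_sqrt_abs real_sqrt_le_mono)
    have q: "\<bar>g0/s'\<bar> \<le> 1" using ab sp by (simp add: abs_div divide_le_eq_1)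
    have "st (0,G) g0 = (proj_ball 1 (-g0/s'), G + g0^2)" by (simp add: st_eq s'_def)
    moreover have "proj_ball 1 (-g0/s') = -g0/s'" using abs_le_iff[THEN iffD1, OF q] by (intro proj1) auto
    ultimately have stD: "st (0,G) g0 = (-g0/s', G + g0^2)" by simp
    have "(G + g0^2) * psi (-g0/s') = s'^2 * psi (-g0/s')" by (simp add: s2')
    also have "\<dots> = -3/10*g0* s' + 21/20*g0^2 + 4/5*g0^3/s'" using sp unfolding psi_def
      by (simp add: field_simps power2_eq_square power3_eq_cube)
    finally have "(G + g0^2) * psi (-g0/s') = -3/10*g0* s' + 21/20*g0^2 + 4/5*g0^3/s'" .
    hence "dD = -3/10*g0* s' + 21/20*g0^2 + 4/5*g0^3/s' + 8 * (min (G + g0^2) 81 - min G 81)"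
      unfolding dD_def stD P0 by (simp add: Phi_def algebra_simps)
    thus ?thesis using sp ab s2' by simp
  qed
  have g0sq: "g0^2 \<le> 1" using g0 by (simp add: abs_square_le_1)
  have cubeb: "-(g0^2) \<le> g0^3/s'" if "g0 \<noteq> 0" for dummy :: unit
  proof -
    have sp: "0 < s'" and ab: "\<bar>g0\<bar> \<le> s'" using Dn[OF that] by auto
    have "-1 \<le> g0/s'" using ab sp by (simp add: abs_le_iff divide_simps)
    hence "g0^2 * (-1) \<le> g0^2 * (g0/s')" by (intro mult_left_mono) auto
    thus ?thesis by (simp add: power2_eq_square power3_eq_cube)
  qed
  have ep1: "0 \<le> 1 - ep" "0 \<le> 1 + ep" using ep by auto
  show ?thesis
  proof (cases "G < 80")
    case True
    have m1: "8 * (min (G+1) 81 - min G 81) = 8" using True by simp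
    have "3/10 \<le> 3/10* s" "4/5/s \<le> 4/5" using s1 by (auto simp: divide_simps)
    hence dUb: "dU \<ge> 171/20" unfolding dU m1 by linarith
    have dDb: "dD \<ge> -7/2"
    proof (cases "g0 = 0")
      case True thus ?thesis using D0 by simp
    next
      case False
      note D = Dn[OF False]
      have "s'^2 \<le> 9^2" using D True g0sq by simp
      hence s9: "s' \<le> 9" by (rule power2_le_imp_le) simp
      have "g0 * s' \<le> 1 * 9" using g0 s9 D by (intro mult_mono) (auto simp: abs_le_iff)
      moreover have "-(g0^2) \<le> g0^3/s'" using cubeb[OF False] .
      moreover have "0 \<le> 8 * (min (G + g0^2) 81 - min G 81)" using min.mono[of G "G + g0^2" 81 81] by simp
      moreover have "0 \<le> g0^2" by simp
      ultimately show ?thesis using conjunct1[OF D] g0sq by linarith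
    qed
    have "(1-ep)/2 * dU \<ge> (1-ep)/2 * (171/20)" using dUb ep1 by (intro mult_left_mono) auto
    moreover have "(1+ep)/2 * dD \<ge> (1+ep)/2 * (-7/2)" using dDb ep1 by (intro mult_left_mono) auto
    moreover have "(1-ep)/2 * (171/20) = 171/40 - 171/40*ep" "(1+ep)/2 * (-7/2) = -7/4 - 7/4*ep" by (simp_all add: field_simps)
    ultimately show ?thesis unfolding split using ep by linarith
  next
    case False
    have "9^2 \<le> s^2" using False s2 by simp
    hence s9: "9 \<le> s" by (rule power2_le_imp_le) (use s1 in linarith)
    have a9: "1/s \<le> 1/9" using s9 by (intro divide_left_mono) auto
    have mnn: "0 \<le> 8 * (min (G+1) 81 - min G 81)" by simp
    have dUb: "dU \<ge> 3/10* s + 21/20 - 4/5/s" unfolding dU using mnn by linarith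
    show ?thesis
    proof (cases "g0 \<le> 0")
      case True
      have dDb: "dD \<ge> 0"
      proof (cases "g0 = 0")
        case True thus ?thesis using D0 by simp
      next
        case False
        note D = Dn[OF False]
        have "0 \<le> -g0 * s'" using True D by (intro mult_nonneg_nonneg) auto
        moreover have "-(g0^2) \<le> g0^3/s'" using cubeb[OF False] .
        moreover have "0 \<le> 8 * (min (G + g0^2) 81 - min G 81)" using min.mono[of G "G + g0^2" 81 81] by simp
        moreover have "0 \<le> g0^2" by simp
        ultimately show ?thesis using conjunct1[OF D] by linarith
      qed
      have "4/5/s \<le> 4/45" using a9 by simp
      hence "dU \<ge> 18/5" using dUb s9 by linarith
      hence "(1-ep)/2 * dU \<ge> (1-ep)/2 * (18/5)" using ep1 by (intro mult_left_mono) auto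
      moreover have "(1+ep)/2 * dD \<ge> 0" using dDb ep1 by simp
      moreover have "(1-ep)/2 * (18/5) = 9/5 - 9/5*ep" by (simp add: field_simps)
      ultimately show ?thesis unfolding split using ep by linarith
    next
      case False
      hence x0: "0 < g0" by simp
      have x1: "g0 \<le> 1" using g0 by simp
      note D = Dn[OF less_imp_neq[OF x0, symmetric]]
      have sps: "s' \<le> s"
      proof -
        have "s'^2 \<le> s^2" using D s2 g0sq by simp
        thus ?thesis by (rule power2_le_imp_le) (use s1 in linarith)
      qed
      define a where "a = 1/s"
      have a0: "0 < a" "a \<le> 1/9" using a9 s1 by (auto simp: a_def)
      have xs: "g0 * s' \<le> g0 * s" using sps x0 by (intro mult_left_mono) auto
      have x3: "g0^3 * a \<le> g0^3/s'"
      proof -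
        have "1/s \<le> 1/s'" using sps D by (intro divide_left_mono) auto
        hence "g0^3 * (1/s) \<le> g0^3 * (1/s')" using x0 by (intro mult_left_mono) auto
        thus ?thesis by (simp add: a_def)
      qed
      have dDb: "dD \<ge> -3/10*(g0* s) + 21/20*g0^2 + 4/5*(g0^3*a)"
      proof -
        have "0 \<le> 8 * (min (G + g0^2) 81 - min G 81)" using min.mono[of G "G + g0^2" 81 81] by simp
        thus ?thesis using conjunct1[OF D] xs x3 by linarith
      qed
      have dUb': "dU \<ge> 3/10* s + 21/20 - 4/5*a" using dUb by (simp add: a_def)
      define M where "M = 3/10*(s - g0* s) + 21/20*(1 + g0^2) - 4/5*(a*(1 - g0^3))"
      define E where "E = -3/10* s - 21/20 + 4/5*a - 3/10*(g0* s) + 21/20*g0^2 + 4/5*(g0^3*a)"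
      have T: "(1-ep)/2*(3/10* s + 21/20 - 4/5*a) + (1+ep)/2*(-3/10*(g0* s) + 21/20*g0^2 + 4/5*(g0^3*a))
           = 1/2*M + ep/2*E" unfolding M_def E_def by (simp add: field_simps)
      have Mb: "M \<ge> 21/10"
      proof -
        have "s * (1 - g0) \<ge> 9 * (1 - g0)" using s9 x1 by (intro mult_right_mono) auto
        moreover have "a * (1 - g0^3) \<le> 1/9 * (3 * (1 - g0))"
        proof (rule mult_mono)
          show "1 - g0^3 \<le> 3 * (1 - g0)"
          proof -
            have "g0^3 \<le> g0^2" "g0^2 \<le> g0" using cube_le_sq[of g0] sq_le[of g0] x0 x1 by auto
            have "1 - g0^3 = (1 - g0) * (1 + g0 + g0^2)" by (simp add: algebra_simps power2_eq_square power3_eq_cube)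
            moreover have "(1 - g0) * (1 + g0 + g0^2) \<le> (1 - g0) * 3" using x1 \<open>g0^2 \<le> g0\<close>
              by (intro mult_left_mono) auto
            ultimately show ?thesis by simp
          qed
          show "0 \<le> 1 - g0^3" using cube_le_sq[of g0] sq_le[of g0] x0 x1 by auto
        qed (use a0 in auto)
        moreover have "0 \<le> (1 - g0)^2" by simp
        moreover have "(1 - g0)^2 = 1 - 2*g0 + g0^2" by (simp add: algebra_simps power2_eq_square)
        moreover have "s * (1 - g0) = s - g0 * s" by (simp add: algebra_simps)
        moreover have "1/9 * (3 * (1 - g0)) = 1/3 - 1/3 * g0" by simp
        ultimately have h1: "9*(1-g0) \<le> s - g0 * s" "a * (1 - g0 ^ 3) \<le> 1/3 - 1/3*g0" "0 \<le> 1 - 2*g0 + g0^2"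
          by linarith+
        show ?thesis unfolding M_def by (rule lin_M[OF h1 x1])
      qed
      have Eb: "ep/2*E \<ge> -3/100 - 21/20000"
      proof -
        have "E \<ge> -3/5* s - 21/20"
        proof -
          have "g0 * s \<le> s" using x1 s1 by (simp add: mult_left_le_one_le)
          moreover have "0 \<le> a" "0 \<le> g0^2" "0 \<le> g0^3 * a" using a0 x0 by auto
          ultimately show ?thesis unfolding E_def by linarith
        qed
        hence "ep/2*E \<ge> ep/2*(-3/5* s - 21/20)" using ep by (intro mult_left_mono) auto
        moreover have "ep/2*(-3/5* s - 21/20) = -3/10*(ep* s) - 21/40*ep" by (simp add: algebra_simps)
        ultimately show ?thesis using eps ep by linarith
      qed
      have "(1-ep)/2 * dU \<ge> (1-ep)/2 * (3/10* s + 21/20 - 4/5*a)" using dUb' ep1 by (intro mult_left_mono) auto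
      moreover have "(1+ep)/2 * dD \<ge> (1+ep)/2 * (-3/10*(g0* s) + 21/20*g0^2 + 4/5*(g0^3*a))"
        using dDb ep1 by (intro mult_left_mono) auto
      ultimately have "(1-ep)/2 * dU + (1+ep)/2 * dD \<ge> 1/2*M + ep/2*E" using T by linarith
      thus ?thesis unfolding split using Mb Eb by linarith
    qed
  qed
qed

lemma step_ineq:
  fixes u G ep g0 :: real
  assumes G: "0 \<le> G" and u: "-1 \<le> u" "u \<le> 1" "u < 0 \<Longrightarrow> -1/sqrt G \<le> u"
    and g0: "\<bar>g0\<bar> \<le> 1" and ep: "0 \<le> ep" "ep \<le> 1/500" "ep * sqrt (G+1) \<le> 1/10"
  shows "(1-ep)/2 * Phi (st (u,G) (-1)) + (1+ep)/2 * Phi (st (u,G) (if 0 < u then 1 else if u < 0 then -1 else g0))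
           - Phi (u,G) \<ge> 1 - 12/5*u"
proof (cases "0 < u")
  case True thus ?thesis using caseP[OF True u(2) G ep(1) ep(3)] by simp
next
  case False
  show ?thesis
  proof (cases "u < 0")
    case True thus ?thesis using caseN[OF True u(1) u(3)[OF True] G, of ep] by simp
  next
    case False
    hence "u = 0" using \<open>\<not> 0 < u\<close> by simp
    thus ?thesis using caseZ[OF G g0 ep] by simp
  qed
qed

definition invS :: "real \<times> real \<Rightarrow> bool" where
  "invS x \<longleftrightarrow> 0 \<le> snd x \<and> -1 \<le> fst x \<and> fst x \<le> 1 \<and> (fst x < 0 \<longrightarrow> -1/sqrt (snd x) \<le> fst x)"

lemma inv_st:
  fixes u G g :: real
  assumes I: "invS (u,G)" and g: "\<bar>g\<bar> \<le> 1" and c: "g = -1 \<or> (0 < u \<and> g = 1) \<or> u = 0"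
  shows "invS (st (u,G) g)"
proof -
  have G: "0 \<le> G" and u: "-1 \<le> u" "u \<le> 1" "u < 0 \<Longrightarrow> -1/sqrt G \<le> u" using I by (auto simp: invS_def)
  define s where "s = sqrt (G+1)"
  have s1: "1 \<le> s" "0 < s" and s2: "s^2 = G + 1" using sqrt_pos_lemma[OF G] by (auto simp: s_def)
  have hs: "0 < 1/s" "1/s \<le> 1" using s1 by auto
  consider "g = -1" | "0 < u" "g = 1" | "u = 0" using c by blast
  thus ?thesis
  proof cases
    case 1
    define v where "v = u + 1/s"
    have stv: "st (u,G) g = (min 1 v, G + 1)"
    proof -
      have "st (u,G) g = (proj_ball 1 v, G+1)" using 1 by (simp add: st_eq s_def v_def)
      moreover have "proj_ball 1 v = min 1 v" unfolding proj_ball_def v_def using u hs by linarith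
      ultimately show ?thesis by simp
    qed
    have neg: "-1/sqrt (G+1) \<le> v" if "v < 0"
    proof -
      have un: "u < 0" using that hs unfolding v_def by linarith
      have "-(2/s) \<le> u"
      proof (cases "1/3 \<le> G")
        case True
        have "sqrt (G+1) \<le> sqrt (4*G)" using True by (intro real_sqrt_le_mono) linarith
        also have "sqrt (4*G) = 2 * sqrt G" by (simp add: real_sqrt_mult)
        finally have "s \<le> 2 * sqrt G" by (simp add: s_def)
        moreover have "0 < sqrt G" using True by simp
        ultimately have "1/sqrt G \<le> 2/s" using s1 by (simp add: divide_simps) 
        moreover have "-1/sqrt G = -(1/sqrt G)" by simp
        ultimately show ?thesis using u(3)[OF un] by linarith
      next
        case False
        have "s^2 < 2^2" using False s2 by simp
        hence "s < 2" by (rule power_less_imp_less_base) simp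
        hence "1 \<le> 2/s" using s1 by (simp add: divide_simps)
        thus ?thesis using u by linarith
      qed
      moreover have "-1/sqrt (G+1) = -(1/s)" by (simp add: s_def)
      moreover have "2/s = 2*(1/s)" by simp
      ultimately show ?thesis unfolding v_def by linarith
    qed
    have "-1 \<le> v" using u hs unfolding v_def by linarith
    hence a1: "-1 \<le> min 1 v" by simp
    have a2: "min 1 v < 0 \<longrightarrow> -1/sqrt (G+1) \<le> min 1 v"
    proof
      assume "min 1 v < 0"
      hence "min 1 v = v" "v < 0" by (auto simp: min_def split: if_splits)
      thus "-1/sqrt (G+1) \<le> min 1 v" using neg by simp
    qed
    show ?thesis unfolding stv invS_def fst_conv snd_conv using G a1 a2 by simp
  next
    case 2
    have stv: "st (u,G) g = (u - 1/s, G + 1)"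
    proof -
      have "st (u,G) g = (proj_ball 1 (u - 1/s), G+1)" using 2 by (simp add: st_eq s_def)
      moreover have "proj_ball 1 (u - 1/s) = u - 1/s" using u hs 2 by (intro proj1) linarith+
      ultimately show ?thesis by simp
    qed
    have b0: "-1/s \<le> u - 1/s" using 2 by simp
    have b1: "-1 \<le> u - 1/s" "u - 1/s \<le> 1" using u hs 2 by linarith+
    have "invS (u - 1/s, G + 1)" unfolding invS_def fst_conv snd_conv using G b0 b1 by (simp add: s_def)
    thus ?thesis unfolding stv .
  next
    case 3
    show ?thesis
    proof (cases "G + g^2 = 0")
      case True
      have "st (u,G) g = (0, G + g^2)" using 3 True by (simp add: st_eq proj_ball_def)
      thus ?thesis unfolding invS_def using True by simp
    next
      case False
      define s' where "s' = sqrt (G + g^2)"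
      have sp: "0 < s'" using False G unfolding s'_def
        by (metis add_nonneg_nonneg real_sqrt_gt_zero zero_le_power2 less_eq_real_def)
      have ab: "\<bar>g\<bar> \<le> s'" unfolding s'_def using G by (metis add_0 add_right_mono real_sqrt_abs real_sqrt_le_mono)
      have q: "-1 \<le> -g/s'" "-g/s' \<le> 1" using ab sp by (auto simp: divide_simps abs_le_iff)
      have stv: "st (u,G) g = (-g/s', G + g^2)"
        using 3 proj1[OF q] by (simp add: st_eq s'_def)
      have "-1/s' \<le> -g/s'" using g sp by (simp add: divide_simps abs_le_iff)
      thus ?thesis unfolding stv invS_def using q G by (simp add: s'_def)
    qed
  qed
qed

lemma psi_neg_bound:
  fixes u G :: real
  assumes "invS (u,G)" "u < 0"
  shows "G * psi u \<le> 37/20"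
proof -
  have G: "0 \<le> G" and u: "-1 \<le> u" "-1/sqrt G \<le> u" using assms by (auto simp: invS_def)
  define w where "w = -u"
  have w: "0 < w" "w \<le> 1" using assms u by (auto simp: w_def)
  have psiu: "psi u = -3/10*w + 21/20*w^2 + 4/5*w^3" unfolding psi_def w_def by (simp add: power3_eq_cube)
  have w2: "w^2 \<le> w" "w^3 \<le> w^2" "0 \<le> w^2" using sq_le[of w] cube_le_sq[of w] w by auto
  show ?thesis
  proof (cases "G \<le> 1")
    case True
    have "psi u \<le> 37/20" unfolding psiu using w w2 by linarith
    show ?thesis
    proof (cases "0 \<le> psi u")
      case True
      have "G * psi u \<le> 1 * psi u" using \<open>G \<le> 1\<close> True by (intro mult_right_mono) auto
      thus ?thesis using \<open>psi u \<le> 37/20\<close> by linarith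
    next
      case False
      hence "G * psi u \<le> 0" using G by (simp add: mult_nonneg_nonpos)
      thus ?thesis by linarith
    qed
  next
    case False
    have Gp: "0 < G" using False by simp
    have "w \<le> 1/sqrt G" using u by (simp add: w_def)
    hence "w^2 \<le> (1/sqrt G)^2" using w by (intro power_mono) auto
    also have "\<dots> = 1/G" using Gp by (simp add: power_divide)
    finally have w2G: "w^2 \<le> 1/G" .
    have "psi u \<le> 37/20 * w^2" unfolding psiu using w w2 by linarith
    also have "\<dots> \<le> 37/20 * (1/G)" using w2G by simp
    finally have "G * psi u \<le> G * (37/20 * (1/G))" using G by (intro mult_left_mono) auto
    thus ?thesis using Gp by simp
  qed
qed

lemma Phi_ub:
  fixes u G N :: real
  assumes "invS (u,G)" "G \<le> N"
  shows "Phi (u,G) \<le> 11/20 * N + 650"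
proof -
  have G: "0 \<le> G" and u: "-1 \<le> u" "u \<le> 1" using assms by (auto simp: invS_def)
  have m: "8 * min G 81 \<le> 648" by simp
  have p1: "psi 1 = 11/20" by (simp add: psi_def)
  have "G * psi u \<le> 11/20 * N + 2"
  proof (cases "u < 0")
    case True
    have "G * psi u \<le> 37/20" using psi_neg_bound[OF assms(1) True] .
    moreover have "0 \<le> 11/20 * N" using G assms(2) by simp
    ultimately show ?thesis by linarith
  next
    case False
    hence "psi u \<le> 11/20" using psi_mono01[of u 1] u p1 by simp
    hence "G * psi u \<le> G * (11/20)" using G by (intro mult_left_mono) auto
    also have "\<dots> \<le> N * (11/20)" using assms(2) by (intro mult_right_mono) auto
    finally show ?thesis by simp
  qed
  thus ?thesis using m unfolding Phi_def by simp
qed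

definition bpmf :: "real \<Rightarrow> real pmf" where
  "bpmf q = map_pmf (\<lambda>b. if b then 1 else 0) (bernoulli_pmf q)"

lemma set_bpmf: "0 < q \<Longrightarrow> q < 1 \<Longrightarrow> set_pmf (bpmf q) = {0, 1}"
  by (auto simp: bpmf_def)

lemma set_bpmf_sub: "set_pmf (bpmf q) \<subseteq> {0, 1}"
  by (auto simp: bpmf_def)

lemma E_bpmf: "0 \<le> q \<Longrightarrow> q \<le> 1 \<Longrightarrow> measure_pmf.expectation (bpmf q) h = q * h 1 + (1 - q) * h 0"
  by (simp add: bpmf_def)

definition stp :: "(real \<Rightarrow> real \<Rightarrow> real) \<Rightarrow> real \<times> real \<Rightarrow> real \<Rightarrow> real \<times> real" where
  "stp gr x s = st x (gr (fst x) s)"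

primrec chain :: "(real \<Rightarrow> real \<Rightarrow> real) \<Rightarrow> real pmf \<Rightarrow> nat \<Rightarrow> (real \<times> real) pmf" where
  "chain gr p 0 = return_pmf (0,0)"
| "chain gr p (Suc t) = bind_pmf (chain gr p t) (\<lambda>x. map_pmf (stp gr x) p)"

lemma chain_fin: "finite (set_pmf p) \<Longrightarrow> finite (set_pmf (chain gr p t))"
  by (induction t) auto

definition grok :: "(real \<Rightarrow> real \<Rightarrow> real) \<Rightarrow> bool" where
  "grok gr \<longleftrightarrow> (\<forall>u. gr u 1 = -1) \<and> (\<forall>u. 0 < u \<longrightarrow> gr u 0 = 1) \<and> (\<forall>u. u < 0 \<longrightarrow> gr u 0 = -1) \<and> \<bar>gr 0 0\<bar> \<le> 1"

lemma chain_inv: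
  assumes gr: "grok gr" and p: "set_pmf p \<subseteq> {0,1}"
  shows "x \<in> set_pmf (chain gr p t) \<Longrightarrow> invS x \<and> snd x \<le> real t"
proof (induction t arbitrary: x)
  case 0 thus ?case by (simp add: invS_def)
next
  case (Suc t)
  then obtain y s where y: "y \<in> set_pmf (chain gr p t)" and s: "s \<in> set_pmf p" and x: "x = stp gr y s"
    by auto
  obtain u G where yu: "y = (u,G)" by (cases y)
  have IH: "invS (u,G)" "G \<le> real t" using Suc.IH[OF y] yu by auto
  have g: "\<bar>gr u s\<bar> \<le> 1 \<and> (gr u s = -1 \<or> (0 < u \<and> gr u s = 1) \<or> u = 0)"
  proof -
    have "s = 0 \<or> s = 1" using s p by auto
    thus ?thesis using gr unfolding grok_def by (cases "0 < u"; cases "u < 0") auto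
  qed
  have xs: "x = st (u,G) (gr u s)" using x yu by (simp add: stp_def)
  have "invS x" unfolding xs using inv_st[OF IH(1)] g by blast
  moreover have "snd x \<le> real (Suc t)"
  proof -
    have "(gr u s)^2 \<le> 1" using g by (simp add: abs_square_le_1)
    thus ?thesis unfolding xs st_def using IH(2) by simp
  qed
  ultimately show ?case by simp
qed

lemma exp_fin:
  assumes "finite (set_pmf M)"
  shows "measure_pmf.expectation M (f :: _ \<Rightarrow> real) = (\<Sum>x\<in>set_pmf M. pmf M x * f x)"
  using assms by (subst integral_measure_pmf[of "set_pmf M"]) auto

lemma exp_chain_Suc:
  assumes "0 \<le> q" "q \<le> 1"
  shows "measure_pmf.expectation (chain gr (bpmf q) (Suc t)) (f :: _ \<Rightarrow> real) =
    (\<Sum>x\<in>set_pmf (chain gr (bpmf q) t). pmf (chain gr (bpmf q) t) x * (q * f (stp gr x 1) + (1-q) * f (stp gr x 0)))"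
proof -
  have fin: "finite (set_pmf (bpmf q))" by (rule finite_subset[OF set_bpmf_sub]) simp
  have "measure_pmf.expectation (chain gr (bpmf q) (Suc t)) f =
     (\<Sum>x\<in>set_pmf (chain gr (bpmf q) t). pmf (chain gr (bpmf q) t) x *\<^sub>R
         measure_pmf.expectation (map_pmf (stp gr x) (bpmf q)) f)"
    unfolding chain.simps by (rule pmf_expectation_bind) (use fin chain_fin[OF fin] in auto)
  also have "\<dots> = (\<Sum>x\<in>set_pmf (chain gr (bpmf q) t). pmf (chain gr (bpmf q) t) x * (q * f (stp gr x 1) + (1-q) * f (stp gr x 0)))"
    by (intro sum.cong refl) (simp add: E_bpmf[OF assms])
  finally show ?thesis .
qed

lemma step_E:
  assumes gr: "grok gr" and q: "0 < q" "q < 1" and ep: "ep = 1 - 2*q" "0 \<le> ep" "ep \<le> 1/500"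
    "ep * sqrt (real n) \<le> 1/10" and t: "t < n"
  shows "measure_pmf.expectation (chain gr (bpmf q) (Suc t)) Phi \<ge>
    measure_pmf.expectation (chain gr (bpmf q) t) Phi + 1 - 12/5 * measure_pmf.expectation (chain gr (bpmf q) t) fst"
proof -
  let ?C = "chain gr (bpmf q) t"
  have fin: "finite (set_pmf (bpmf q))" by (rule finite_subset[OF set_bpmf_sub]) simp
  have finC: "finite (set_pmf ?C)" by (rule chain_fin[OF fin])
  have pw: "q * Phi (stp gr x 1) + (1-q) * Phi (stp gr x 0) \<ge> Phi x + 1 - 12/5 * fst x"
    if x: "x \<in> set_pmf ?C" for x
  proof -
    obtain u G where xu: "x = (u,G)" by (cases x)
    have I: "invS (u,G)" "G \<le> real t" using chain_inv[OF gr set_bpmf_sub x] xu by auto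
    have G: "0 \<le> G" and u: "-1 \<le> u" "u \<le> 1" "u < 0 \<Longrightarrow> -1/sqrt G \<le> u" using I(1) by (auto simp: invS_def)
    have "sqrt (G+1) \<le> sqrt (real n)" using I(2) t by (intro real_sqrt_le_mono) linarith
    hence "ep * sqrt (G+1) \<le> ep * sqrt (real n)" using ep by (intro mult_left_mono) auto
    hence eps: "ep * sqrt (G+1) \<le> 1/10" using ep by linarith
    have g0: "\<bar>gr 0 0\<bar> \<le> 1" using gr by (simp add: grok_def)
    have s1: "stp gr (u,G) 1 = st (u,G) (-1)" using gr by (simp add: stp_def grok_def)
    have s0: "stp gr (u,G) 0 = st (u,G) (if 0 < u then 1 else if u < 0 then -1 else gr 0 0)"
      using gr by (simp add: stp_def grok_def)
    have qq: "q * Phi (stp gr x 1) + (1-q) * Phi (stp gr x 0) =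
      (1-ep)/2 * Phi (st (u,G) (-1)) + (1+ep)/2 * Phi (st (u,G) (if 0 < u then 1 else if u < 0 then -1 else gr 0 0))"
    proof -
      have qe: "q = (1-ep)/2" using ep by simp
      show ?thesis unfolding xu s1 s0 by (simp add: qe field_simps)
    qed
    show ?thesis unfolding qq using step_ineq[OF G u g0 ep(2,3) eps] xu by simp
  qed
  have "measure_pmf.expectation (chain gr (bpmf q) (Suc t)) Phi =
    (\<Sum>x\<in>set_pmf ?C. pmf ?C x * (q * Phi (stp gr x 1) + (1-q) * Phi (stp gr x 0)))"
    using q by (intro exp_chain_Suc) auto
  also have "\<dots> \<ge> (\<Sum>x\<in>set_pmf ?C. pmf ?C x * (Phi x + 1 - 12/5 * fst x))"
    using pw by (intro sum_mono mult_left_mono) auto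
  also have "(\<Sum>x\<in>set_pmf ?C. pmf ?C x * (Phi x + 1 - 12/5 * fst x)) =
     (\<Sum>x\<in>set_pmf ?C. pmf ?C x * Phi x) + (\<Sum>x\<in>set_pmf ?C. pmf ?C x) - 12/5 * (\<Sum>x\<in>set_pmf ?C. pmf ?C x * fst x)"
    by (simp add: algebra_simps sum.distrib sum_subtractf sum_distrib_left)
  also have "(\<Sum>x\<in>set_pmf ?C. pmf ?C x) = 1" using finC by (intro sum_pmf_eq_1) auto
  finally show ?thesis using exp_fin[OF finC, of Phi] exp_fin[OF finC, of fst] by simp
qed

lemma tele:
  assumes gr: "grok gr" and q: "0 < q" "q < 1" and ep: "ep = 1 - 2*q" "0 \<le> ep" "ep \<le> 1/500"
    "ep * sqrt (real n) \<le> 1/10"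
  shows "m \<le> n \<Longrightarrow> measure_pmf.expectation (chain gr (bpmf q) m) Phi \<ge>
      (\<Sum>t<m. (1 - 12/5 * measure_pmf.expectation (chain gr (bpmf q) t) fst))"
proof (induction m)
  case 0 thus ?case by (simp add: Phi_def psi_def)
next
  case (Suc m)
  hence "m < n" by simp
  from step_E[OF gr q ep this] Suc.IH Suc.prems show ?case by simp
qed

lemma E_Phi_ub:
  assumes gr: "grok gr"
  shows "measure_pmf.expectation (chain gr (bpmf q) n) Phi \<le> 11/20 * real n + 650"
proof -
  let ?C = "chain gr (bpmf q) n"
  have fin: "finite (set_pmf (bpmf q))" by (rule finite_subset[OF set_bpmf_sub]) simp
  have finC: "finite (set_pmf ?C)" by (rule chain_fin[OF fin])
  have "measure_pmf.expectation ?C Phi = (\<Sum>x\<in>set_pmf ?C. pmf ?C x * Phi x)" by (rule exp_fin[OF finC])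
  also have "\<dots> \<le> (\<Sum>x\<in>set_pmf ?C. pmf ?C x * (11/20 * real n + 650))"
  proof (intro sum_mono mult_left_mono)
    fix x assume x: "x \<in> set_pmf ?C"
    obtain u G where xu: "x = (u,G)" by (cases x)
    have I: "invS (u,G)" "G \<le> real n" using chain_inv[OF gr set_bpmf_sub x] xu by auto
    show "Phi x \<le> 11/20 * real n + 650" using Phi_ub[OF I] xu by simp
  qed auto
  also have "\<dots> = 11/20 * real n + 650"
    using sum_pmf_eq_1[OF finC order_refl] by (simp add: sum_distrib_right[symmetric])
  finally show ?thesis .
qed

lemma sum_fst_lb:
  assumes gr: "grok gr" and q: "0 < q" "q < 1" and ep: "ep = 1 - 2*q" "0 \<le> ep" "ep \<le> 1/500"
    "ep * sqrt (real n) \<le> 1/10"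
  shows "(\<Sum>t<n. measure_pmf.expectation (chain gr (bpmf q) t) fst) \<ge> 5/12 * (9/20 * real n - 650)"
proof -
  have a: "measure_pmf.expectation (chain gr (bpmf q) n) Phi \<ge>
      (\<Sum>t<n. (1 - 12/5 * measure_pmf.expectation (chain gr (bpmf q) t) fst))"
    using tele[OF gr q ep order_refl] .
  have "(\<Sum>t<n. (1 - 12/5 * measure_pmf.expectation (chain gr (bpmf q) t) fst)) =
        real n - 12/5 * (\<Sum>t<n. measure_pmf.expectation (chain gr (bpmf q) t) fst)"
    by (simp add: sum_subtractf sum_distrib_left)
  hence "9/20 * real n - 650 \<le> 12/5 * (\<Sum>t<n. measure_pmf.expectation (chain gr (bpmf q) t) fst)"
    using a E_Phi_ub[OF gr, of q n] by linarith
  thus ?thesis by (simp add: field_simps)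
qed

lemma ada_local:
  "(\<forall>j. 1 \<le> j \<and> j \<le> t \<longrightarrow> T j = T' j) \<Longrightarrow> ada_state gr R T t = ada_state gr R T' t"
  by (induction t) (auto simp: Let_def)

lemma ada_stp: "ada_state gr 1 T (Suc t) = stp gr (ada_state gr 1 T t) (T (Suc t))"
  by (simp add: stp_def st_def Let_def)

lemma chain_Pi:
  "t \<le> m \<Longrightarrow> map_pmf (\<lambda>S. ada_state gr 1 (\<lambda>j. S (k + j)) t) (Pi_pmf {k+1..k+m} d (\<lambda>_. p)) = chain gr p t"
proof (induction m arbitrary: t)
  case 0 thus ?case by (simp add: map_pmf_const)
next
  case (Suc m)
  let ?Q = "Pi_pmf {k+1..k+m} d (\<lambda>_. p)"
  have ins: "{k+1..k+Suc m} = insert (k + Suc m) {k+1..k+m}" by auto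
  have PI: "Pi_pmf {k+1..k+Suc m} d (\<lambda>_. p) = map_pmf (\<lambda>(y,f). f(k + Suc m := y)) (pair_pmf p ?Q)"
    unfolding ins by (rule Pi_pmf_insert) auto
  show ?case
  proof (cases "t \<le> m")
    case True
    have eq: "ada_state gr 1 (\<lambda>j. (f(k + Suc m := y)) (k + j)) t = ada_state gr 1 (\<lambda>j. f (k + j)) t" for f y
      using True by (intro ada_local) auto
    have eq': "ada_state gr 1 (\<lambda>j. if j = Suc m then y else f (k + j)) t = ada_state gr 1 (\<lambda>j. f (k + j)) t" for f y
      using True by (intro ada_local) auto
    have "map_pmf (\<lambda>S. ada_state gr 1 (\<lambda>j. S (k + j)) t) (Pi_pmf {k+1..k+Suc m} d (\<lambda>_. p))
        = map_pmf (\<lambda>S. ada_state gr 1 (\<lambda>j. S (k + j)) t) (map_pmf snd (pair_pmf p ?Q))"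
      unfolding PI pmf.map_comp by (intro map_pmf_cong refl) (auto simp: eq eq')
    also have "\<dots> = chain gr p t" unfolding map_snd_pair_pmf using Suc.IH[OF True] .
    finally show ?thesis .
  next
    case False
    hence t: "t = Suc m" using Suc.prems by simp
    have eq: "ada_state gr 1 (\<lambda>j. (f(k + Suc m := y)) (k + j)) (Suc m) =
              stp gr (ada_state gr 1 (\<lambda>j. f (k + j)) m) y" for f y
    proof -
      have h1: "ada_state gr 1 (\<lambda>j. (f(k + Suc m := y)) (k + j)) m = ada_state gr 1 (\<lambda>j. f (k + j)) m"
        by (intro ada_local) auto
      have "ada_state gr 1 (\<lambda>j. (f(k + Suc m := y)) (k + j)) (Suc m) =
            stp gr (ada_state gr 1 (\<lambda>j. (f(k + Suc m := y)) (k + j)) m) ((f(k + Suc m := y)) (k + Suc m))"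
        by (rule ada_stp)
      thus ?thesis unfolding h1 by simp
    qed
    have eq': "ada_state gr 1 (\<lambda>j. if j = Suc m then y else f (k + j)) (Suc m) =
              stp gr (ada_state gr 1 (\<lambda>j. f (k + j)) m) y" for f y
      using eq[of f y] by (simp add: fun_upd_def)
    have "map_pmf (\<lambda>S. ada_state gr 1 (\<lambda>j. S (k + j)) t) (Pi_pmf {k+1..k+Suc m} d (\<lambda>_. p))
        = map_pmf (\<lambda>(y,f). stp gr (ada_state gr 1 (\<lambda>j. f (k + j)) m) y) (pair_pmf p ?Q)"
      unfolding PI pmf.map_comp t by (intro map_pmf_cong refl) (auto simp del: ada_state.simps simp: eq eq')
    also have "\<dots> = bind_pmf ?Q (\<lambda>f. map_pmf (\<lambda>y. stp gr (ada_state gr 1 (\<lambda>j. f (k + j)) m) y) p)"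
      unfolding pair_pmf_def map_pmf_def
      by (subst bind_commute_pmf) (simp add: bind_assoc_pmf bind_return_pmf)
    also have "\<dots> = bind_pmf (map_pmf (\<lambda>f. ada_state gr 1 (\<lambda>j. f (k + j)) m) ?Q) (\<lambda>x. map_pmf (stp gr x) p)"
      by (simp add: bind_map_pmf)
    also have "\<dots> = chain gr p (Suc m)" using Suc.IH[of m] by simp
    finally show ?thesis using t by simp
  qed
qed

lemma choose_le_half:
  assumes "0 < m" "m < n"
  shows "real (n choose m) \<le> 2^(n-1)"
proof -
  obtain n' where n': "n = Suc n'" using assms by (cases n) auto
  obtain m' where m': "m = Suc m'" using assms by (cases m) auto
  have "n choose m = (n' choose m') + (n' choose Suc m')" unfolding n' m' by simp
  also have "\<dots> = (\<Sum>i\<in>{m', Suc m'}. n' choose i)" by simp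
  also have "\<dots> \<le> (\<Sum>i\<in>{..n'}. n' choose i)" using assms n' m' by (intro sum_mono2) auto
  also have "\<dots> = 2^n'" by (rule choose_row_sum)
  finally have "n choose m \<le> 2^n'" .
  hence "real (n choose m) \<le> real (2^n')" by linarith
  thus ?thesis using n' by simp
qed

lemma val_bound:
  fixes n :: nat and ep q :: real
  assumes n: "3000 \<le> n" and ep: "ep = 1/(10* sqrt n)" and q: "q = (1 - ep)/2"
  shows "measure_pmf.prob (binomial_pmf n q) {k. n < 2*k} \<ge> 1/50"
proof -
  define r where "r = sqrt (real n)"
  have r0: "0 < r" using n by (simp add: r_def)
  have r2: "r^2 = real n" by (simp add: r_def)
  have r50: "50 \<le> r"
  proof -
    have "50^2 \<le> r^2" using n r2 by simp
    thus ?thesis by (rule power2_le_imp_le) (use r0 in simp)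
  qed
  have epr: "ep * r = 1/10" using r0 by (simp add: ep r_def)
  have epn: "ep * real n = r/10" using r0 r2 by (simp add: ep r_def[symmetric] power2_eq_square field_simps)
  have ep0: "0 < ep" "ep \<le> 1/500" using r0 r50 by (auto simp: ep r_def[symmetric] divide_simps)
  have q01: "0 < q" "q < 1" "q \<in> {0..1}" using ep0 by (auto simp: q)
  define B where "B = binomial_pmf n q"
  define pk where "pk = pmf B"
  have pk_def': "pk k = real (n choose k) * q^k * (1-q)^(n-k)" for k
    unfolding pk_def B_def using q01 by simp
  have pk0: "0 \<le> pk k" for k by (simp add: pk_def)
  have setB: "set_pmf B = {..n}" unfolding B_def using q01 by simp
  have PB: "measure_pmf.prob B {k. P k} = (\<Sum>k\<in>{k. k \<le> n \<and> P k}. pk k)" for P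
  proof -
    have "measure_pmf.prob B {k. P k} = measure_pmf.prob B ({k. P k} \<inter> set_pmf B)"
      by (simp add: measure_Int_set_pmf)
    also have "{k. P k} \<inter> set_pmf B = {k. k \<le> n \<and> P k}" using setB by auto
    also have "measure_pmf.prob B \<dots> = (\<Sum>k\<in>{k. k \<le> n \<and> P k}. pk k)"
      by (subst measure_measure_pmf_finite) (auto simp: pk_def)
    finally show ?thesis .
  qed
  define a where "a = (\<Sum>k\<in>{k. k \<le> n \<and> n < 2*k}. pk k)"
  define b where "b = (\<Sum>k\<in>{k. k \<le> n \<and> 2*k < n}. pk k)"
  define z where "z = (\<Sum>k\<in>{k. k \<le> n \<and> 2*k = n}. pk k)"
  have abz: "a + b + z = 1"
  proof -
    have "{..n} = ({k. k \<le> n \<and> n < 2*k} \<union> {k. k \<le> n \<and> 2*k < n}) \<union> {k. k \<le> n \<and> 2*k = n}" by auto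
    hence "(\<Sum>k\<in>{..n}. pk k) = a + b + z" unfolding a_def b_def z_def
      by (simp add: sum.union_disjoint disjoint_iff)
    moreover have "(\<Sum>k\<in>{..n}. pk k) = 1" unfolding pk_def using setB by (intro sum_pmf_eq_1) auto
    ultimately show ?thesis by simp
  qed
  have zb: "z \<le> 1/2"
  proof (cases "even n")
    case False
    hence e: "{k. k \<le> n \<and> 2*k = n} = {}" by auto
    show ?thesis unfolding z_def e by simp
  next
    case True
    define m where "m = n div 2"
    have nm: "n = 2*m" using True by (simp add: m_def)
    have "{k. k \<le> n \<and> 2*k = n} = {m}" using nm by auto
    hence "z = pk m" unfolding z_def by simp
    also have "\<dots> = real (n choose m) * (q * (1-q))^m"
      unfolding pk_def' using nm by (simp add: power_mult_distrib)
    also have "\<dots> \<le> 2^(n-1) * (1/4)^m"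
    proof (intro mult_mono power_mono)
      show "real (n choose m) \<le> 2^(n-1)" using nm n by (intro choose_le_half) auto
      have "0 \<le> (q - 1/2)^2" by simp
      thus "q * (1 - q) \<le> 1/4" by (simp add: power2_eq_square algebra_simps)
      show "0 \<le> q * (1 - q)" using q01 by simp
    qed (use q01 in auto)
    also have "(1/4::real)^m = 1/2^n" using nm by (simp add: power_mult power_divide)
    also have "2^(n-1) * (1/2^n) = (1/2::real)"
    proof -
      have "n = Suc (n-1)" using n by simp
      hence "(2::real)^n = 2 * 2^(n-1)" by (metis power_Suc)
      thus ?thesis by simp
    qed
    finally show ?thesis .
  qed
  define L where "L = 3*r"
  define T where "T = (\<Sum>k\<in>{k. k \<le> n \<and> 2*real k + L < real n}. pk k)"
  have Tb: "T \<le> 1/5"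
  proof -
    define \<delta> where "\<delta> = 29/20 * r"
    have "T = measure_pmf.prob B {k. 2*real k + L < real n}" unfolding T_def PB ..
    also have "\<dots> \<le> measure_pmf.prob B {x. real x \<le> real n * q - \<delta>}"
    proof (rule measure_pmf.finite_measure_mono)
      have "real n * q = real n / 2 - (ep * real n) / 2" unfolding q by (simp add: field_simps)
      hence "real n * q - \<delta> = real n / 2 - 3/2 * r"
        unfolding \<delta>_def using epn by linarith
      thus "{k. 2*real k + L < real n} \<subseteq> {x. real x \<le> real n * q - \<delta>}" unfolding L_def by auto
    qed auto
    also have "\<dots> \<le> exp (- 2 * \<delta>^2 / real n)"
      unfolding B_def by (rule binomial_distribution.prob_le) (use q01 n r0 in \<open>auto simp: binomial_distribution_def \<delta>_def\<close>)
    also have "- 2 * \<delta>^2 / real n = - (841/200)"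
      unfolding \<delta>_def using r2 n by (simp add: power_mult_distrib field_simps)
    also have "exp (- (841/200::real)) \<le> 1/5"
    proof -
      have "1 + 841/200 \<le> exp (841/200::real)" by (rule exp_ge_add_one_self)
      hence "5 \<le> exp (841/200::real)" by simp
      thus ?thesis by (simp add: exp_minus divide_simps)
    qed
    finally show ?thesis .
  qed
  define K2 where "K2 = {j. j \<le> n \<and> 2*j < n \<and> real n \<le> 2 * real j + L}"
  have finK2: "finite K2" unfolding K2_def by simp
  have bK: "b \<le> (\<Sum>j\<in>K2. pk j) + T"
  proof -
    have sub: "{k. k \<le> n \<and> 2*k < n} \<subseteq> K2 \<union> {k. k \<le> n \<and> 2*real k + L < real n}"
      unfolding K2_def by auto
    have "b \<le> (\<Sum>k\<in>K2 \<union> {k. k \<le> n \<and> 2*real k + L < real n}. pk k)"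
      unfolding b_def using sub pk0 by (intro sum_mono2) (auto simp: K2_def)
    also have "\<dots> \<le> (\<Sum>j\<in>K2. pk j) + T"
    proof -
      let ?X = "{k. k \<le> n \<and> 2*real k + L < real n}"
      have "(\<Sum>k\<in>K2 \<union> ?X. pk k) = (\<Sum>k\<in>K2. pk k) + (\<Sum>k\<in>?X. pk k) - (\<Sum>k\<in>K2 \<inter> ?X. pk k)"
        by (rule sum_Un) (auto simp: K2_def)
      moreover have "0 \<le> (\<Sum>k\<in>K2 \<inter> ?X. pk k)" using pk0 by (intro sum_nonneg) auto
      ultimately show ?thesis unfolding T_def by linarith
    qed
    finally show ?thesis .
  qed
  have pair: "pk (n - j) \<ge> 2/5 * pk j" if j: "j \<in> K2" for j
  proof -
    have j1: "2*j < n" "real n \<le> 2 * real j + L" using j by (auto simp: K2_def)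
    define m where "m = n - 2*j"
    have nj: "n - j = j + m" using j1 by (simp add: m_def)
    have mL: "real m \<le> L" using j1 by (simp add: m_def of_nat_diff)
    define \<rho> where "\<rho> = q / (1 - q)"
    have q1: "0 < 1 - q" using q01 by simp
    have rho1: "1 - 2*ep \<le> \<rho>"
    proof -
      have "\<rho> = (1 - ep)/(1 + ep)" unfolding \<rho>_def q using ep0 by (simp add: field_simps)
      moreover have "(1 - 2*ep) * (1 + ep) \<le> 1 - ep" using ep0 by (simp add: algebra_simps)
      moreover have "1 - 2*ep = ((1-2*ep)*(1+ep))/(1+ep)" using ep0 by simp
      ultimately have "1 - 2*ep \<le> (1-ep)/(1+ep)"
        by (metis divide_right_mono ep0(1) less_eq_real_def add_pos_pos zero_less_one)
      thus ?thesis using \<open>\<rho> = (1 - ep)/(1 + ep)\<close> by simp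
    qed
    have "\<rho>^m \<ge> 2/5"
    proof -
      have "1 + real m * (-2*ep) \<le> (1 + (-2*ep))^m" using ep0 by (intro Bernoulli_inequality) auto
      moreover have "(1 - 2*ep)^m \<le> \<rho>^m" using rho1 ep0 by (intro power_mono) auto
      moreover have "real m * ep \<le> L * ep" using mL ep0 by (intro mult_right_mono) auto
      moreover have "L * ep = 3/10" unfolding L_def using epr by (simp add: algebra_simps)
      ultimately show ?thesis by (simp add: algebra_simps)
    qed
    have qm: "q^m = \<rho>^m * (1-q)^m" unfolding \<rho>_def using q1 by (simp add: power_divide)
    have X0: "0 \<le> real (n choose j) * q^j * (1-q)^j" using q01 by simp
    have "pk (n - j) = real (n choose j) * q^j * (1-q)^j * q^m"
    proof -
      have "pk (n - j) = real (n choose (n - j)) * q^(n-j) * (1-q)^(n - (n-j))" by (rule pk_def')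
      moreover have "n choose (n - j) = n choose j" using j1 by (simp add: binomial_symmetric[symmetric])
      moreover have "n - (n - j) = j" using j1 by simp
      ultimately show ?thesis unfolding nj by (simp add: power_add)
    qed
    moreover have "pk j = real (n choose j) * q^j * (1-q)^j * (1-q)^m"
      unfolding pk_def' by (simp add: nj[symmetric] power_add[symmetric])
    moreover have "q^m \<ge> 2/5 * (1-q)^m" unfolding qm using \<open>\<rho>^m \<ge> 2/5\<close> q1
      by (intro mult_right_mono) auto
    ultimately show ?thesis using X0 by (metis mult.left_commute mult_left_mono)
  qed
  have aK: "a \<ge> 2/5 * (\<Sum>j\<in>K2. pk j)"
  proof -
    have inj: "inj_on (\<lambda>j. n - j) K2" by (auto simp: K2_def inj_on_def)
    have img: "(\<lambda>j. n - j) ` K2 \<subseteq> {k. k \<le> n \<and> n < 2*k}" by (auto simp: K2_def)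
    have "2/5 * (\<Sum>j\<in>K2. pk j) = (\<Sum>j\<in>K2. 2/5 * pk j)" by (simp add: sum_distrib_left)
    also have "\<dots> \<le> (\<Sum>j\<in>K2. pk (n - j))" using pair by (intro sum_mono) auto
    also have "\<dots> = (\<Sum>k\<in>(\<lambda>j. n - j) ` K2. pk k)" using inj by (simp add: sum.reindex)
    also have "\<dots> \<le> a" unfolding a_def using img pk0 by (intro sum_mono2) auto
    finally show ?thesis .
  qed
  have "a \<ge> 6/70" using abz zb Tb bK aK by linarith
  moreover have "measure_pmf.prob (binomial_pmf n q) {k. n < 2*k} = a" unfolding a_def B_def[symmetric] PB ..
  ultimately show ?thesis by simp
qed

definition fS :: "real \<Rightarrow> real \<Rightarrow> real" where
  "fS x s = (if s = 1 then -x else \<bar>x\<bar>)"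

definition grall :: "(real \<Rightarrow> real \<Rightarrow> real) \<Rightarrow> bool" where
  "grall gr \<longleftrightarrow> (\<forall>u. gr u 1 = -1) \<and> (\<forall>u s. s \<noteq> 1 \<longrightarrow> 0 < u \<longrightarrow> gr u s = 1)
     \<and> (\<forall>u s. s \<noteq> 1 \<longrightarrow> u < 0 \<longrightarrow> gr u s = -1) \<and> (\<forall>s. s \<noteq> 1 \<longrightarrow> \<bar>gr 0 s\<bar> \<le> 1)"

lemma grall_of_subgrad:
  assumes H: "\<forall>s x y. fS y s \<ge> fS x s + gr x s * (y - x)"
  shows "grall gr"
proof -
  have a: "gr u 1 = -1" for u
  proof -
    have "- (u+1) \<ge> -u + gr u 1 * ((u+1) - u)" using H[rule_format, where s=1 and x=u and y="u+1"] by (simp add: fS_def)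
    moreover have "- (u-1) \<ge> -u + gr u 1 * ((u-1) - u)" using H[rule_format, where s=1 and x=u and y="u-1"] by (simp add: fS_def)
    ultimately show ?thesis by simp
  qed
  have b: "gr u s = 1" if "s \<noteq> 1" "0 < u" for u s
  proof -
    have "\<bar>2*u\<bar> \<ge> \<bar>u\<bar> + gr u s * (2*u - u)" using H[rule_format, where s=s and x=u and y="2*u"] that by (simp add: fS_def)
    hence "gr u s * u \<le> 1 * u" using that by (simp add: algebra_simps)
    hence 1: "gr u s \<le> 1" using that by (simp add: mult_le_cancel_right)
    have "\<bar>0\<bar> \<ge> \<bar>u\<bar> + gr u s * (0 - u)" using H[rule_format, where s=s and x=u and y=0] that by (simp add: fS_def)
    hence "1 * u \<le> gr u s * u" using that by (simp add: algebra_simps)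
    hence "1 \<le> gr u s" using that by (simp add: mult_le_cancel_right)
    thus ?thesis using 1 by simp
  qed
  have c: "gr u s = -1" if "s \<noteq> 1" "u < 0" for u s
  proof -
    have "\<bar>2*u\<bar> \<ge> \<bar>u\<bar> + gr u s * (2*u - u)" using H[rule_format, where s=s and x=u and y="2*u"] that by (simp add: fS_def)
    hence "(gr u s + 1) * u \<le> 0" using that by (simp add: algebra_simps)
    hence 1: "-1 \<le> gr u s" using that mult_le_0_iff[of "gr u s + 1" u] by auto
    have "\<bar>0\<bar> \<ge> \<bar>u\<bar> + gr u s * (0 - u)" using H[rule_format, where s=s and x=u and y=0] that by (simp add: fS_def)
    hence "0 \<le> (gr u s + 1) * u" using that by (simp add: algebra_simps)
    hence "gr u s \<le> -1" using that zero_le_mult_iff[of "gr u s + 1" u] by auto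
    thus ?thesis using 1 by simp
  qed
  have d: "\<bar>gr 0 s\<bar> \<le> 1" if "s \<noteq> 1" for s
  proof -
    have "1 \<ge> gr 0 s" using H[rule_format, where s=s and x=0 and y=1] that by (simp add: fS_def)
    moreover have "1 \<ge> - gr 0 s" using H[rule_format, where s=s and x=0 and y="-1"] that by (simp add: fS_def)
    ultimately show ?thesis by simp
  qed
  show ?thesis unfolding grall_def using a b c d by blast
qed

lemma grall_grok: "grall gr \<Longrightarrow> grok gr"
  unfolding grall_def grok_def by simp

lemma grall_hom:
  assumes "grall gr" "0 < R" "u \<noteq> 0"
  shows "gr (R*u) s = gr u s"
proof (cases "s = 1")
  case True thus ?thesis using assms by (simp add: grall_def)
next
  case False
  show ?thesis
  proof (cases "0 < u")
    case True
    hence "0 < R*u" using assms by simp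
    thus ?thesis using True False assms by (simp add: grall_def)
  next
    case nu: False
    hence "u < 0" using assms by simp
    hence "R*u < 0" using assms by (simp add: mult_pos_neg)
    thus ?thesis using \<open>u < 0\<close> False assms by (simp add: grall_def)
  qed
qed

lemma proj_scale:
  assumes R: "0 < R" shows "proj_ball R (R * w) = R * proj_ball 1 w"
proof -
  have f1: "w \<le> -1 \<Longrightarrow> R*w \<le> -R" using R by (metis mult.right_neutral mult_left_mono mult_minus_right less_eq_real_def)
  have f2: "-1 \<le> w \<Longrightarrow> -R \<le> R*w" using R by (metis mult.right_neutral mult_left_mono mult_minus_right less_eq_real_def)
  have f3: "w \<le> 1 \<Longrightarrow> R*w \<le> R" using R by (metis mult.right_neutral mult_left_mono less_eq_real_def)
  have f4: "1 \<le> w \<Longrightarrow> R \<le> R*w" using R by (metis mult.right_neutral mult_left_mono less_eq_real_def)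
  show ?thesis unfolding proj_ball_def
  proof (cases "w \<le> -1")
    case True thus "max (- R) (min R (R * w)) = R * max (- 1) (min 1 w)" using f1 R by (simp add: min_def max_def)
  next
    case False
    show "max (- R) (min R (R * w)) = R * max (- 1) (min 1 w)"
    proof (cases "w \<le> 1")
      case True thus ?thesis using False f2 f3 by (simp add: min_def max_def)
    next
      case nf: False thus ?thesis using False f4 R by (simp add: min_def max_def)
    qed
  qed
qed

lemma ada_hom:
  assumes "grall gr" "0 < R"
  shows "ada_state gr R T t = (R * fst (ada_state gr 1 T t), snd (ada_state gr 1 T t))"
proof (induction t)
  case 0 thus ?case by simp
next
  case (Suc t)
  obtain u G where uG: "ada_state gr 1 T t = (u,G)" by (cases "ada_state gr 1 T t")
  have IH: "ada_state gr R T t = (R*u, G)" using Suc uG by simp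
  have g: "gr (R*u) (T (Suc t)) = gr u (T (Suc t))"
    using grall_hom[OF assms] by (cases "u = 0") auto
  have "R * u - R * gr u (T (Suc t)) / sqrt (G + (gr u (T (Suc t)))\<^sup>2) =
        R * (u - 1 * gr u (T (Suc t)) / sqrt (G + (gr u (T (Suc t)))\<^sup>2))" by (simp add: algebra_simps)
  thus ?case using IH uG g proj_scale[OF assms(2)] by (simp add: Let_def)
qed

lemma adasgd_hom:
  assumes "grall gr" "0 < R"
  shows "adasgd n gr R S = R * adasgd n gr 1 S"
  unfolding adasgd_def using ada_hom[OF assms] by (simp add: sum_distrib_left)

lemma fS_hom: "0 < R \<Longrightarrow> fS (R*x) s = R * fS x s"
  by (simp add: fS_def abs_mult)

lemma val_hom: "0 < R \<Longrightarrow> val_risk n fS S (R*x) = R * val_risk n fS S x"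
  unfolding val_risk_def by (simp add: fS_hom sum_distrib_left)

lemma fst_ada_le1: "fst (ada_state gr 1 T t) \<le> 1"
  by (cases t) (auto simp: Let_def proj_ball_def)

lemma PiM_pmf_finite:
  fixes I :: "nat set" and p :: "real pmf" and E :: "(nat \<Rightarrow> real) set"
  assumes I: "finite I" and E: "finite E" "E \<subseteq> PiE I (\<lambda>_. UNIV)"
  shows "E \<in> sets (PiM I (\<lambda>_. measure_pmf p))"
    and "measure (PiM I (\<lambda>_. measure_pmf p)) E = measure_pmf.prob (Pi_pmf I undefined (\<lambda>_. p)) E"
proof -
  interpret product_sigma_finite "\<lambda>_::nat. measure_pmf p" by unfold_locales
  have sing: "{\<sigma>} = PiE I (\<lambda>i. {\<sigma> i})" if "\<sigma> \<in> E" for \<sigma>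
  proof -
    have ext: "\<sigma> \<in> PiE I (\<lambda>_. UNIV)" using that E by auto
    show ?thesis
    proof
      show "{\<sigma>} \<subseteq> PiE I (\<lambda>i. {\<sigma> i})" using ext by (auto simp: PiE_def extensional_def)
      show "PiE I (\<lambda>i. {\<sigma> i}) \<subseteq> {\<sigma>}"
      proof
        fix f assume f: "f \<in> PiE I (\<lambda>i. {\<sigma> i})"
        have "f x = \<sigma> x" for x
        proof (cases "x \<in> I")
          case True thus ?thesis using f by (auto simp: PiE_def)
        next
          case False thus ?thesis using f ext by (auto simp: PiE_def extensional_def)
        qed
        thus "f \<in> {\<sigma>}" by auto
      qed
    qed
  qed
  have ms: "{\<sigma>} \<in> sets (PiM I (\<lambda>_. measure_pmf p))" if "\<sigma> \<in> E" for \<sigma>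
    unfolding sing[OF that] by (rule sets_PiM_I_finite[OF I]) auto
  have EU: "E = (\<Union>\<sigma>\<in>E. {\<sigma>})" by auto
  show mE: "E \<in> sets (PiM I (\<lambda>_. measure_pmf p))"
    by (subst EU) (use ms E(1) in \<open>intro sets.finite_UN\<close>)
  have pmfPi: "pmf (Pi_pmf I undefined (\<lambda>_. p)) \<sigma> = (\<Prod>i\<in>I. pmf p (\<sigma> i))" if "\<sigma> \<in> E" for \<sigma>
    using that E I by (intro pmf_Pi') (auto simp: PiE_def extensional_def)
  have "emeasure (PiM I (\<lambda>_. measure_pmf p)) E = (\<Sum>\<sigma>\<in>E. emeasure (PiM I (\<lambda>_. measure_pmf p)) {\<sigma>})"
    using E(1) ms by (rule emeasure_eq_sum_singleton)
  also have "\<dots> = (\<Sum>\<sigma>\<in>E. ennreal (\<Prod>i\<in>I. pmf p (\<sigma> i)))"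
  proof (intro sum.cong refl)
    fix \<sigma> assume s: "\<sigma> \<in> E"
    have "emeasure (PiM I (\<lambda>_. measure_pmf p)) {\<sigma>} = (\<Prod>i\<in>I. emeasure (measure_pmf p) {\<sigma> i})"
      unfolding sing[OF s] by (rule emeasure_PiM[OF I]) auto
    also have "\<dots> = (\<Prod>i\<in>I. ennreal (pmf p (\<sigma> i)))" by (simp add: emeasure_pmf_single)
    also have "\<dots> = ennreal (\<Prod>i\<in>I. pmf p (\<sigma> i))" by (simp add: prod_ennreal)
    finally show "emeasure (PiM I (\<lambda>_. measure_pmf p)) {\<sigma>} = ennreal (\<Prod>i\<in>I. pmf p (\<sigma> i))" .
  qed
  also have "\<dots> = ennreal (\<Sum>\<sigma>\<in>E. \<Prod>i\<in>I. pmf p (\<sigma> i))"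
    by (rule sum_ennreal) (auto intro: prod_nonneg)
  finally have em: "emeasure (PiM I (\<lambda>_. measure_pmf p)) E = ennreal (\<Sum>\<sigma>\<in>E. \<Prod>i\<in>I. pmf p (\<sigma> i))" .
  have "measure (PiM I (\<lambda>_. measure_pmf p)) E = (\<Sum>\<sigma>\<in>E. \<Prod>i\<in>I. pmf p (\<sigma> i))"
    unfolding measure_def em by (simp add: sum_nonneg prod_nonneg)
  also have "\<dots> = (\<Sum>\<sigma>\<in>E. pmf (Pi_pmf I undefined (\<lambda>_. p)) \<sigma>)" using pmfPi by simp
  also have "\<dots> = measure_pmf.prob (Pi_pmf I undefined (\<lambda>_. p)) E"
    using E(1) by (simp add: measure_measure_pmf_finite)
  finally show "measure (PiM I (\<lambda>_. measure_pmf p)) E = measure_pmf.prob (Pi_pmf I undefined (\<lambda>_. p)) E" .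
qed

lemma Pi_split_prob:
  fixes n :: nat and p :: "'a pmf" and V Tr :: "(nat \<Rightarrow> 'a) \<Rightarrow> bool"
  assumes V: "\<And>f g. V (\<lambda>x. if x \<in> {1..n} then f x else g x) = V f"
      and Tr: "\<And>f g. Tr (\<lambda>x. if x \<in> {1..n} then f x else g x) = Tr g"
  shows "measure_pmf.prob (Pi_pmf {1..2*n} d (\<lambda>_. p)) {S. V S \<and> Tr S} =
         measure_pmf.prob (Pi_pmf {1..n} d (\<lambda>_. p)) {S. V S} * measure_pmf.prob (Pi_pmf {n+1..n+n} d (\<lambda>_. p)) {S. Tr S}"
proof -
  let ?P1 = "Pi_pmf {1..n} d (\<lambda>_. p)" and ?P2 = "Pi_pmf {n+1..n+n} d (\<lambda>_. p)"
  let ?h = "\<lambda>(f,g) x. if x \<in> {1..n} then f x else g x"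
  have U: "{1..2*n} = {1..n} \<union> {n+1..n+n}" by auto
  have "Pi_pmf {1..2*n} d (\<lambda>_. p) = map_pmf ?h (pair_pmf ?P1 ?P2)"
    unfolding U by (rule Pi_pmf_union) auto
  hence "measure_pmf.prob (Pi_pmf {1..2*n} d (\<lambda>_. p)) {S. V S \<and> Tr S} =
         measure_pmf.prob (pair_pmf ?P1 ?P2) (?h -` {S. V S \<and> Tr S})" by (simp add: measure_map_pmf)
  also have "?h -` {S. V S \<and> Tr S} = {f. V f} \<times> {g. Tr g}" using V Tr by auto
  also have "measure_pmf.prob (pair_pmf ?P1 ?P2) ({f. V f} \<times> {g. Tr g}) =
       measure_pmf.prob (pair_pmf ?P1 ?P2) (({f. V f} \<inter> set_pmf ?P1) \<times> ({g. Tr g} \<inter> set_pmf ?P2))"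
  proof -
    have "({f. V f} \<times> {g. Tr g}) \<inter> set_pmf (pair_pmf ?P1 ?P2) = ({f. V f} \<inter> set_pmf ?P1) \<times> ({g. Tr g} \<inter> set_pmf ?P2)"
      by (auto simp: set_pair_pmf)
    thus ?thesis by (metis measure_Int_set_pmf)
  qed
  also have "\<dots> = measure_pmf.prob ?P1 ({f. V f} \<inter> set_pmf ?P1) * measure_pmf.prob ?P2 ({g. Tr g} \<inter> set_pmf ?P2)"
    by (rule measure_pmf_prob_product) (auto intro: countable_subset[OF _ countable_set_pmf])
  also have "\<dots> = measure_pmf.prob ?P1 {f. V f} * measure_pmf.prob ?P2 {g. Tr g}"
    by (simp add: measure_Int_set_pmf)
  finally show ?thesis .
qed

lemma val_prob:
  assumes q: "0 < q" "q < 1"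
  shows "measure_pmf.prob (Pi_pmf {1..n} undefined (\<lambda>_. bpmf q)) {S. n < 2 * card {i\<in>{1..n}. S i = 1}}
       = measure_pmf.prob (binomial_pmf n q) {k. n < 2*k}"
proof -
  define \<phi> where "\<phi> = (\<lambda>b::bool. if b then 1 else (0::real))"
  have "Pi_pmf {1..n} undefined (\<lambda>_. bpmf q) =
        map_pmf (\<lambda>f x. if x \<in> {1..n} then f x else undefined) (Pi_pmf {1..n} 0 (\<lambda>_. bpmf q))"
    by (rule Pi_pmf_default_swap[symmetric]) simp
  also have "Pi_pmf {1..n} 0 (\<lambda>_. bpmf q) = map_pmf (\<lambda>h. \<phi> \<circ> h) (Pi_pmf {1..n} False (\<lambda>_. bernoulli_pmf q))"
    unfolding bpmf_def \<phi>_def[symmetric] by (rule Pi_pmf_map) (auto simp: \<phi>_def)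
  finally have eq: "Pi_pmf {1..n} undefined (\<lambda>_. bpmf q) =
      map_pmf (\<lambda>h x. if x \<in> {1..n} then \<phi> (h x) else undefined) (Pi_pmf {1..n} False (\<lambda>_. bernoulli_pmf q))"
    by (simp add: pmf.map_comp o_def)
  have cnt: "card {i\<in>{1..n}. (if i \<in> {1..n} then \<phi> (h i) else undefined) = 1} = card {i\<in>{1..n}. h i}" for h
    by (intro arg_cong[where f=card]) (auto simp: \<phi>_def)
  have "map_pmf (\<lambda>S. card {i\<in>{1..n}. S i = 1}) (Pi_pmf {1..n} undefined (\<lambda>_. bpmf q)) =
        map_pmf (\<lambda>h. card {i\<in>{1..n}. h i}) (Pi_pmf {1..n} False (\<lambda>_. bernoulli_pmf q))"
    unfolding eq pmf.map_comp o_def cnt ..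
  also have "\<dots> = binomial_pmf n q"
    by (rule binomial_pmf_altdef'[symmetric]) (use q in auto)
  finally have M: "map_pmf (\<lambda>S. card {i\<in>{1..n}. S i = 1}) (Pi_pmf {1..n} undefined (\<lambda>_. bpmf q)) = binomial_pmf n q" .
  have "measure_pmf.prob (binomial_pmf n q) {k. n < 2*k} =
     measure_pmf.prob (Pi_pmf {1..n} undefined (\<lambda>_. bpmf q)) ((\<lambda>S. card {i\<in>{1..n}. S i = 1}) -` {k. n < 2*k})"
    unfolding M[symmetric] by (simp add: measure_map_pmf)
  thus ?thesis by (simp add: vimage_def)
qed

lemma train_prob:
  assumes gr: "grall gr" and n: "3000 \<le> n" and ep: "ep = 1/(10* sqrt n)" and q: "q = (1-ep)/2"
  shows "measure_pmf.prob (Pi_pmf {n+1..n+n} d (\<lambda>_. bpmf q)) {S. 5/144 \<le> adasgd n gr 1 S} \<ge> 1/16"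
proof -
  let ?P = "Pi_pmf {n+1..n+n} d (\<lambda>_. bpmf q)"
  define c where "c = (\<lambda>S. adasgd n gr 1 S)"
  have fb: "finite (set_pmf (bpmf q))" by (rule finite_subset[OF set_bpmf_sub]) simp
  have finP: "finite (set_pmf ?P)" using fb by (simp add: set_Pi_pmf o_def finite_PiE_dflt)
  have intg: "integrable (measure_pmf ?P) (h :: _ \<Rightarrow> real)" for h
    by (rule integrable_measure_pmf_finite[OF finP])
  have r0: "0 < sqrt (real n)" using n by simp
  have ep0: "0 < ep" "ep \<le> 1/500"
  proof -
    have "50^2 \<le> (sqrt (real n))^2" using n by simp
    hence "50 \<le> sqrt (real n)" by (rule power2_le_imp_le) simp
    thus "0 < ep" "ep \<le> 1/500" using r0 by (auto simp: ep divide_simps)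
  qed
  have q01: "0 < q" "q < 1" using ep0 by (auto simp: q)
  have epq: "ep = 1 - 2*q" by (simp add: q field_simps)
  have epn: "ep * sqrt (real n) \<le> 1/10" using r0 by (simp add: ep)
  have Ec: "measure_pmf.expectation ?P c = (\<Sum>t<n. measure_pmf.expectation (chain gr (bpmf q) t) fst) / n"
  proof -
    have "measure_pmf.expectation ?P c =
          measure_pmf.expectation ?P (\<lambda>S. \<Sum>t<n. fst (ada_state gr 1 (\<lambda>t. S (n + t)) t)) / n"
      unfolding c_def adasgd_def by simp
    also have "measure_pmf.expectation ?P (\<lambda>S. \<Sum>t<n. fst (ada_state gr 1 (\<lambda>t. S (n + t)) t)) =
          (\<Sum>t<n. measure_pmf.expectation ?P (\<lambda>S. fst (ada_state gr 1 (\<lambda>t. S (n + t)) t)))"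
      by (rule Bochner_Integration.integral_sum) (rule intg)
    also have "\<dots> = (\<Sum>t<n. measure_pmf.expectation (chain gr (bpmf q) t) fst)"
    proof (intro sum.cong refl)
      fix t assume t: "t \<in> {..<n}"
      have "measure_pmf.expectation ?P (\<lambda>S. fst (ada_state gr 1 (\<lambda>t. S (n + t)) t)) =
            measure_pmf.expectation (map_pmf (\<lambda>S. ada_state gr 1 (\<lambda>j. S (n + j)) t) ?P) fst" by simp
      also have "map_pmf (\<lambda>S. ada_state gr 1 (\<lambda>j. S (n + j)) t) ?P = chain gr (bpmf q) t"
        using t by (intro chain_Pi) auto
      finally show "measure_pmf.expectation ?P (\<lambda>S. fst (ada_state gr 1 (\<lambda>t. S (n + t)) t)) =
            measure_pmf.expectation (chain gr (bpmf q) t) fst" .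
    qed
    finally show ?thesis .
  qed
  have lb: "(\<Sum>t<n. measure_pmf.expectation (chain gr (bpmf q) t) fst) \<ge> 5/12 * (9/20 * real n - 650)"
    by (rule sum_fst_lb[OF grall_grok[OF gr] q01 epq ep0(1)[THEN less_imp_le] ep0(2) epn])
  have Ec_lb: "measure_pmf.expectation ?P c \<ge> 7/72"
  proof -
    have nn: "0 < real n" using n by simp
    have "7/72 * real n \<le> 5/12 * (9/20 * real n - 650)" using n by simp
    also have "\<dots> \<le> (\<Sum>t<n. measure_pmf.expectation (chain gr (bpmf q) t) fst)" by (rule lb)
    finally have "7/72 * real n \<le> (\<Sum>t<n. measure_pmf.expectation (chain gr (bpmf q) t) fst)" .
    thus ?thesis unfolding Ec using nn by (simp add: divide_simps)
  qed
  have c1: "c S \<le> 1" for S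
  proof -
    have "(\<Sum>t<n. fst (ada_state gr 1 (\<lambda>t. S (n + t)) t)) \<le> (\<Sum>t<n. 1)"
      by (intro sum_mono) (rule fst_ada_le1)
    thus ?thesis unfolding c_def adasgd_def using n by (simp add: divide_simps)
  qed
  have pw: "c S \<le> 5/144 + indicator {S. 5/144 \<le> c S} S" for S
    using c1[of S] by (cases "5/144 \<le> c S") auto
  have "measure_pmf.expectation ?P c \<le> measure_pmf.expectation ?P (\<lambda>S. 5/144 + indicator {S. 5/144 \<le> c S} S)"
    by (rule integral_mono[OF intg intg]) (rule pw)
  also have "\<dots> = measure_pmf.expectation ?P (\<lambda>S. 5/144) + measure_pmf.expectation ?P (indicator {S. 5/144 \<le> c S})"
    by (rule Bochner_Integration.integral_add[OF intg intg])
  also have "measure_pmf.expectation ?P (\<lambda>S. 5/144) = (5/144::real)" by simp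
  also have "measure_pmf.expectation ?P (indicator {S. 5/144 \<le> c S}) = measure_pmf.prob ?P {S. 5/144 \<le> c S}"
    by simp
  finally have "measure_pmf.expectation ?P c \<le> 5/144 + measure_pmf.prob ?P {S. 5/144 \<le> c S}" .
  thus ?thesis using Ec_lb unfolding c_def by linarith
qed

lemma convex_fS: "convex_on UNIV (\<lambda>x. fS x s)"
proof (rule convex_onI)
  fix t x y :: real assume t: "0 < t" "t < 1"
  show "fS ((1 - t) *\<^sub>R x + t *\<^sub>R y) s \<le> (1 - t) * fS x s + t * fS y s"
  proof (cases "s = 1")
    case True thus ?thesis by (simp add: fS_def algebra_simps)
  next
    case False
    have "\<bar>(1 - t) * x + t * y\<bar> \<le> \<bar>(1 - t) * x\<bar> + \<bar>t * y\<bar>" by (rule abs_triangle_ineq)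
    also have "\<dots> = (1 - t) * \<bar>x\<bar> + t * \<bar>y\<bar>" using t by (simp add: abs_mult)
    finally show ?thesis using False by (simp add: fS_def)
  qed
qed simp

lemma lip_fS: "\<bar>fS x s - fS y s\<bar> \<le> \<bar>x - y\<bar>"
  by (simp add: fS_def abs_triangle_ineq3 abs_minus_commute)

lemma sum_fS:
  assumes x: "0 < x" and S: "\<forall>i\<in>{1..n}. S i \<in> {0,1}"
  shows "(\<Sum>i=1..n. fS x (S i)) = x * (real n - 2 * real (card {i\<in>{1..n}. S i = 1}))"
proof -
  define A where "A = {i\<in>{1..n}. S i = 1}"
  define B where "B = {i\<in>{1..n}. S i \<noteq> 1}"
  have U: "{1..n} = A \<union> B" and dj: "A \<inter> B = {}" and fA: "finite A" and fB: "finite B"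
    by (auto simp: A_def B_def)
  have "(\<Sum>i=1..n. fS x (S i)) = (\<Sum>i\<in>A. fS x (S i)) + (\<Sum>i\<in>B. fS x (S i))"
    unfolding U by (rule sum.union_disjoint[OF fA fB dj])
  also have "(\<Sum>i\<in>A. fS x (S i)) = (\<Sum>i\<in>A. -x)" by (intro sum.cong refl) (auto simp: A_def fS_def)
  also have "(\<Sum>i\<in>B. fS x (S i)) = (\<Sum>i\<in>B. x)" using x by (intro sum.cong refl) (auto simp: B_def fS_def)
  also have "card A + card B = n"
  proof -
    have "card (A \<union> B) = card A + card B" by (rule card_Un_disjoint[OF fA fB dj])
    thus ?thesis unfolding U[symmetric] by simp
  qed
  hence hB: "real (card B) = real n - real (card A)" by linarith
  have sA: "(\<Sum>i\<in>A. -x) = -(x * real (card A))" by (simp add: mult.commute)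
  have sB: "(\<Sum>i\<in>B. x) = x * (real n - real (card A))" unfolding hB[symmetric] by (simp add: mult.commute)
  have "(\<Sum>i\<in>A. -x) + (\<Sum>i\<in>B. x) = x * (real n - 2 * real (card A))" unfolding sA sB by (simp add: algebra_simps)
  finally show ?thesis unfolding A_def .
qed

theorem proposition2:
  fixes n K :: nat and eta :: "nat \<Rightarrow> real"
  assumes "n \<ge> 3000" and "\<forall>k\<le>K. eta k > 0"
  shows "\<exists>(D::real measure) (f::real \<Rightarrow> real \<Rightarrow> real).
    prob_space D \<and>
    (\<forall>s\<in>space D. convex_on UNIV (\<lambda>x. f x s)) \<and>
    (\<forall>s\<in>space D. \<forall>x y. \<bar>f x s - f y s\<bar> \<le> \<bar>x - y\<bar>) \<and>
    (\<forall>x. integrable D (f x)) \<and>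
    (\<forall>x. pop_risk D f 0 \<le> pop_risk D f x) \<and>
    (\<forall>gr::real \<Rightarrow> real \<Rightarrow> real.
       (\<forall>s\<in>space D. \<forall>x y. f y s \<ge> f x s + gr x s * (y - x)) \<longrightarrow>
       (\<exists>E\<in>sets (PiM {1..2*n} (\<lambda>_. D)).
          measure (PiM {1..2*n} (\<lambda>_. D)) E \<ge> 1/1000 \<and>
          (\<forall>S\<in>E. \<forall>k\<le>K.
             (\<forall>k'\<le>K. val_risk n f S (adasgd n gr (eta k) S) \<le> val_risk n f S (adasgd n gr (eta k') S))
             \<longrightarrow> pop_risk D f (adasgd n gr (eta k) S) - (INF x. pop_risk D f x)
                 \<ge> Max (eta ` {0..K}) / (288 * sqrt (real n)))))"
proof -
  define ep where "ep = 1/(10 * sqrt (real n))"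
  define q where "q = (1 - ep)/2"
  define D where "D = measure_pmf (bpmf q)"
  have r0: "0 < sqrt (real n)" using assms(1) by simp
  have ep0: "0 < ep" "ep \<le> 1/500"
  proof -
    have "50^2 \<le> (sqrt (real n))^2" using assms(1) by simp
    hence "50 \<le> sqrt (real n)" by (rule power2_le_imp_le) simp
    thus "0 < ep" "ep \<le> 1/500" using r0 by (auto simp: ep_def divide_simps)
  qed
  have q01: "0 < q" "q < 1" "0 \<le> q" "q \<le> 1" using ep0 by (auto simp: q_def)
  have spD: "space D = UNIV" by (simp add: D_def)
  have finb: "finite (set_pmf (bpmf q))" by (rule finite_subset[OF set_bpmf_sub]) simp
  have popF: "pop_risk D fS x = q * (-x) + (1-q) * \<bar>x\<bar>" for x
    unfolding pop_risk_def D_def using q01 by (simp add: E_bpmf fS_def)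
  have Fpos: "pop_risk D fS x = ep * x" if "0 < x" for x
    using that unfolding popF by (simp add: q_def field_simps)
  have Fnn: "0 \<le> pop_risk D fS x" for x
  proof -
    have "q * (-x) \<ge> - q * \<bar>x\<bar>" using q01 by (simp add: mult_left_mono)
    moreover have "q \<le> 1 - q" using ep0 by (simp add: q_def field_simps)
    hence "(1-q) * \<bar>x\<bar> \<ge> q * \<bar>x\<bar>" by (intro mult_right_mono) auto
    ultimately show ?thesis unfolding popF by linarith
  qed
  have F0: "pop_risk D fS 0 = 0" unfolding popF by simp
  have INF0: "(INF x. pop_risk D fS x) = 0"
    by (rule cInf_eq_minimum) (use F0 Fnn in \<open>auto intro: range_eqI[of _ _ 0]\<close>)
  show ?thesis
  proof (intro exI[of _ D] exI[of _ fS] conjI allI impI ballI)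
    show "prob_space D" unfolding D_def by (rule measure_pmf.prob_space_axioms)
    show "convex_on UNIV (\<lambda>x. fS x s)" for s by (rule convex_fS)
    show "\<bar>fS x s - fS y s\<bar> \<le> \<bar>x - y\<bar>" for x y s by (rule lip_fS)
    show "integrable D (fS x)" for x unfolding D_def by (rule integrable_measure_pmf_finite[OF finb])
    show "pop_risk D fS 0 \<le> pop_risk D fS x" for x using F0 Fnn by simp
  next
    fix gr :: "real \<Rightarrow> real \<Rightarrow> real"
    assume H0: "\<forall>s\<in>space D. \<forall>x y. fS x s + gr x s * (y - x) \<le> fS y s"
    have gr: "grall gr" using H0 by (intro grall_of_subgrad) (auto simp: spD)
    define c where "c = (\<lambda>S. adasgd n gr 1 S)"
    define nU where "nU = (\<lambda>S::nat \<Rightarrow> real. card {i\<in>{1..n}. S i = 1})"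
    define E where "E = {S \<in> PiE {1..2*n} (\<lambda>_. {0,1}). n < 2 * nU S \<and> 5/144 \<le> c S}"
    have finE: "finite E" unfolding E_def by (rule finite_subset[of _ "PiE {1..2*n} (\<lambda>_. {0::real,1})"]) (auto intro: finite_PiE)
    have Esub: "E \<subseteq> PiE {1..2*n} (\<lambda>_. UNIV)" unfolding E_def by (auto simp: PiE_def)
    let ?P = "Pi_pmf {1..2*n} undefined (\<lambda>_. bpmf q)"
    have Esets: "E \<in> sets (PiM {1..2*n} (\<lambda>_. D))" unfolding D_def by (rule PiM_pmf_finite(1)[OF _ finE Esub]) simp
    have mE: "measure (PiM {1..2*n} (\<lambda>_. D)) E = measure_pmf.prob ?P E"
      unfolding D_def by (rule PiM_pmf_finite(2)[OF _ finE Esub]) simp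
    have supp: "set_pmf ?P \<subseteq> PiE {1..2*n} (\<lambda>_. {0,1})"
    proof
      fix S assume "S \<in> set_pmf ?P"
      hence h: "\<forall>x. (x \<in> {1..2*n} \<longrightarrow> S x \<in> set_pmf (bpmf q)) \<and> (x \<notin> {1..2*n} \<longrightarrow> S x = undefined)"
        by (simp add: set_Pi_pmf PiE_dflt_def)
      have a: "S x \<in> {0,1}" if "x \<in> {1..2*n}" for x using h that set_bpmf_sub[of q] by blast
      have b: "S x = undefined" if "x \<notin> {1..2*n}" for x using h that by blast
      show "S \<in> PiE {1..2*n} (\<lambda>_. {0,1})" unfolding PiE_def extensional_def Pi_def using a b by blast
    qed
    have PE: "measure_pmf.prob ?P E = measure_pmf.prob ?P {S. n < 2 * nU S \<and> 5/144 \<le> c S}"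
    proof -
      have E2: "E = {S. n < 2 * nU S \<and> 5/144 \<le> c S} \<inter> PiE {1..2*n} (\<lambda>_. {0,1})" unfolding E_def by auto
      have "E \<inter> set_pmf ?P = {S. n < 2 * nU S \<and> 5/144 \<le> c S} \<inter> set_pmf ?P"
        unfolding E2 using supp by auto
      hence "measure_pmf.prob ?P (E \<inter> set_pmf ?P) = measure_pmf.prob ?P ({S. n < 2 * nU S \<and> 5/144 \<le> c S} \<inter> set_pmf ?P)"
        by simp
      thus ?thesis unfolding measure_Int_set_pmf .
    qed
    have split: "measure_pmf.prob ?P {S. n < 2 * nU S \<and> 5/144 \<le> c S} =
       measure_pmf.prob (Pi_pmf {1..n} undefined (\<lambda>_. bpmf q)) {S. n < 2 * nU S} *
       measure_pmf.prob (Pi_pmf {n+1..n+n} undefined (\<lambda>_. bpmf q)) {S. 5/144 \<le> c S}"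
    proof (rule Pi_split_prob)
      fix f g :: "nat \<Rightarrow> real"
      show "(n < 2 * nU (\<lambda>x. if x \<in> {1..n} then f x else g x)) = (n < 2 * nU f)"
        unfolding nU_def by (metis (no_types, lifting) Collect_cong)
      define M where "M = (\<lambda>x. if x \<in> {1..n} then f x else g x)"
      have "fst (ada_state gr 1 (\<lambda>t. M (n + t)) t) = fst (ada_state gr 1 (\<lambda>t. g (n + t)) t)" for t
        by (intro arg_cong[where f=fst] ada_local) (auto simp: M_def)
      hence "c M = c g" unfolding c_def adasgd_def by simp
      thus "(5/144 \<le> c (\<lambda>x. if x \<in> {1..n} then f x else g x)) = (5/144 \<le> c g)"
        unfolding M_def by simp
    qed
    have Pv: "measure_pmf.prob (Pi_pmf {1..n} undefined (\<lambda>_. bpmf q)) {S. n < 2 * nU S} \<ge> 1/50"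
      unfolding nU_def val_prob[OF q01(1,2)] by (rule val_bound[OF assms(1) ep_def q_def])
    have Pt: "measure_pmf.prob (Pi_pmf {n+1..n+n} undefined (\<lambda>_. bpmf q)) {S. 5/144 \<le> c S} \<ge> 1/16"
      unfolding c_def by (rule train_prob[OF gr assms(1) ep_def q_def])
    have "1/50 * (1/16) \<le> measure_pmf.prob (Pi_pmf {1..n} undefined (\<lambda>_. bpmf q)) {S. n < 2 * nU S} *
       measure_pmf.prob (Pi_pmf {n+1..n+n} undefined (\<lambda>_. bpmf q)) {S. 5/144 \<le> c S}"
      using Pv Pt by (intro mult_mono) auto
    hence meas: "measure (PiM {1..2*n} (\<lambda>_. D)) E \<ge> 1/1000" unfolding mE PE split by simp
    have gap: "\<forall>S\<in>E. \<forall>k\<le>K.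
             (\<forall>k'\<le>K. val_risk n fS S (adasgd n gr (eta k) S) \<le> val_risk n fS S (adasgd n gr (eta k') S))
             \<longrightarrow> pop_risk D fS (adasgd n gr (eta k) S) - (INF x. pop_risk D fS x)
                 \<ge> Max (eta ` {0..K}) / (288 * sqrt (real n))"
    proof (intro ballI allI impI)
      fix S k
      assume S: "S \<in> E" and k: "k \<le> K"
        and mn: "\<forall>k'\<le>K. val_risk n fS S (adasgd n gr (eta k) S) \<le> val_risk n fS S (adasgd n gr (eta k') S)"
      have cS: "5/144 \<le> c S" and nS: "n < 2 * nU S" and S01: "\<forall>i\<in>{1..n}. S i \<in> {0,1}"
        using S unfolding E_def by (auto simp: PiE_def)
      have cpos: "0 < c S" using cS by linarith
      have V0: "val_risk n fS S (c S) < 0"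
      proof -
        have VV: "val_risk n fS S (c S) = c S * (real n - 2 * real (nU S)) / real n"
          unfolding val_risk_def nU_def sum_fS[OF cpos S01] ..
        have "real n - 2 * real (nU S) < 0"
        proof -
          have "real n < real (2 * nU S)" using nS by (simp only: of_nat_less_iff)
          thus ?thesis by simp
        qed
        hence "c S * (real n - 2 * real (nU S)) < 0" using cpos by (rule mult_pos_neg[rotated])
        moreover have "0 < real n" using assms(1) by simp
        ultimately have "c S * (real n - 2 * real (nU S)) / real n < 0" by (rule divide_neg_pos)
        thus ?thesis unfolding VV .
      qed
      have ada: "adasgd n gr (eta k') S = eta k' * c S" if "k' \<le> K" for k'
      proof -
        have "0 < eta k'" using assms(2) that by simp
        thus ?thesis unfolding c_def by (rule adasgd_hom[OF gr])
      qed
      have etak: "eta k' \<le> eta k" if "k' \<le> K" for k'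
      proof -
        have "val_risk n fS S (eta k * c S) \<le> val_risk n fS S (eta k' * c S)"
          using mn that k ada by simp
        hence "eta k * val_risk n fS S (c S) \<le> eta k' * val_risk n fS S (c S)"
          using val_hom assms(2) that k by simp
        thus ?thesis using V0 by (simp add: mult_le_cancel_right)
      qed
      have Mle: "Max (eta ` {0..K}) \<le> eta k" by (rule Max.boundedI) (auto intro: etak)
      have M0: "0 \<le> Max (eta ` {0..K})"
      proof -
        have "eta 0 \<le> Max (eta ` {0..K})" by (rule Max_ge) auto
        thus ?thesis using assms(2) by (metis le_less_trans less_eq_real_def zero_le)
      qed
      have ek: "0 < eta k" using assms(2) k by simp
      have "pop_risk D fS (adasgd n gr (eta k) S) - (INF x. pop_risk D fS x) = ep * (eta k * c S)"
        unfolding ada[OF k] INF0 using Fpos[of "eta k * c S"] ek cpos by simp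
      also have "ep * (eta k * c S) \<ge> ep * (Max (eta ` {0..K}) * (5/144))"
        using Mle cS M0 ep0 ek by (intro mult_left_mono mult_mono) auto
      also have "ep * (Max (eta ` {0..K}) * (5/144)) = Max (eta ` {0..K}) / (288 * sqrt (real n))"
        unfolding ep_def using r0 by (simp add: field_simps)
      finally show "Max (eta ` {0..K}) / (288 * sqrt (real n)) \<le>
          pop_risk D fS (adasgd n gr (eta k) S) - (INF x. pop_risk D fS x)" .
    qed
    show "\<exists>E\<in>sets (PiM {1..2*n} (\<lambda>_. D)).
          measure (PiM {1..2*n} (\<lambda>_. D)) E \<ge> 1/1000 \<and>
          (\<forall>S\<in>E. \<forall>k\<le>K.
             (\<forall>k'\<le>K. val_risk n fS S (adasgd n gr (eta k) S) \<le> val_risk n fS S (adasgd n gr (eta k') S))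
             \<longrightarrow> pop_risk D fS (adasgd n gr (eta k) S) - (INF x. pop_risk D fS x)
                 \<ge> Max (eta ` {0..K}) / (288 * sqrt (real n)))"
      using Esets meas gap by blast
  qed
qed

end
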